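(* Let $k\ge1$, let $q_1,\dots,q_k$ be integers and $h_{i,j}$ ($1\le i\le k$, $j\in\{0,1\}$) integers. Let $H(t)\in\mathbb Q(t)$ with $H\not\equiv0\pmod p$, where $p$ is a prime with $p\ge k+\deg H$, $p\nmid q_1\cdots q_k$, and such that if $H(t)$ reduces to a polynomial modulo $p$ then $\deg_p H\ge k$. Define $$H^+(t):=\sum_{j_1,\dots,j_k\in\{0,1\}}(-1)^{j_1+\cdots+j_k}H(t+h_{1,j_1}q_1+\cdots+h_{k,j_k}q_k).$$ Then $$v_p\big(H^+(t)\big)=\sum_{i=1}^k v_p(h_{i,1}-h_{i,0})=:v_p(\mathbf h).$$ Moreover, assuming that if $H(t)$ reduces to a polynomial modulo $p$ then $\deg_p H>k$, for any integer $b$ we have $$v_p\big(H^+(t)+b\big)=\min\{v_p(\mathbf h),v_p(b)\}.$$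
   Context: For $R\in\mathbb Q(t)$ write $R=R_+/R_-$ with $R_\pm\in\mathbb Z[t]$ coprime; $\deg R=\max(\deg R_+,\deg R_-)$ and $\deg_p R$ is the degree of the reduction modulo $p$. For a rational number $r=p^e a/b$ with $p\nmid ab$, $v_p(r)=e$, and $v_p(0)=\infty$. For a nonzero rational function $R$, $v_p(R)$ is the integer $e$ such that $R=p^eR_0$ with $R_0\in\mathbb Q(t)$ having $p$-integral reduction not identically $0$ modulo $p$ (i.e. $R_0\not\equiv0\pmod p$); $v_p(0)=\infty$. *)

theory Defs
  imports "HOL-Computational_Algebra.Computational_Algebra" "HOL-Library.Extended_Real" "HOL-Library.FuncSet"
begin

type_synonym ratfun = "rat poly fract"

definition ratfun_of :: "int poly \<Rightarrow> int poly \<Rightarrow> ratfun" where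
  "ratfun_of A B = Fract (map_poly of_int A) (map_poly of_int B)"

definition nonzero_mod :: "nat \<Rightarrow> int poly \<Rightarrow> bool" where
  "nonzero_mod p A \<longleftrightarrow> (\<exists>i. \<not> int p dvd coeff A i)"

definition vp_rat :: "nat \<Rightarrow> rat \<Rightarrow> ereal" where
  "vp_rat p r = (if r = 0 then \<infinity> else
     ereal (of_int (THE e::int. \<exists>a b::int. \<not> int p dvd a \<and> \<not> int p dvd b \<and>
        r = (of_nat p) powi e * (of_int a / of_int b))))"

text \<open>p-adic valuation of a rational function: R = p^e R_0 with R_0 p-integral and
  with reduction not identically 0 mod p, i.e. R_0 = A/B with A, B integer polynomials
  both not identically 0 mod p.\<close>
definition vp_ratfun :: "nat \<Rightarrow> ratfun \<Rightarrow> ereal" where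
  "vp_ratfun p R = (if R = 0 then \<infinity> else
     ereal (of_int (THE e::int. \<exists>A B::int poly. nonzero_mod p A \<and> nonzero_mod p B \<and>
        R = Fract [:(of_nat p) powi e:] 1 * ratfun_of A B)))"

text \<open>Degree of a rational function given in lowest terms R_+/R_-.\<close>
definition deg_ratfun :: "int poly \<Rightarrow> int poly \<Rightarrow> nat" where
  "deg_ratfun Rp Rm = max (degree Rp) (degree Rm)"

definition red_mod :: "nat \<Rightarrow> int poly \<Rightarrow> int poly" where
  "red_mod p A = map_poly (\<lambda>c. c mod int p) A"

definition reduces_to_poly :: "nat \<Rightarrow> int poly \<Rightarrow> int poly \<Rightarrow> bool" where
  "reduces_to_poly p Rp Rm \<longleftrightarrow> (\<exists>Q. red_mod p Rp = red_mod p (Q * Rm))"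

definition deg_p :: "nat \<Rightarrow> int poly \<Rightarrow> int poly \<Rightarrow> nat" where
  "deg_p p Rp Rm = degree (red_mod p (SOME Q. red_mod p Rp = red_mod p (Q * Rm)))"

definition shift_ratfun :: "int poly \<Rightarrow> int poly \<Rightarrow> int \<Rightarrow> ratfun" where
  "shift_ratfun Rp Rm c = ratfun_of (pcompose Rp [:c, 1:]) (pcompose Rm [:c, 1:])"

definition Hplus :: "nat \<Rightarrow> (nat \<Rightarrow> int) \<Rightarrow> (nat \<Rightarrow> nat \<Rightarrow> int) \<Rightarrow> int poly \<Rightarrow> int poly \<Rightarrow> ratfun" where
  "Hplus k q h Hp Hm = (\<Sum>j \<in> PiE {1..k} (\<lambda>_. {0,1::nat}).
     (-1) ^ (\<Sum>i=1..k. j i) * shift_ratfun Hp Hm (\<Sum>i=1..k. h i (j i) * q i))"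

end

theory Submission
  imports Defs
begin


abbreviation ri :: "int poly \<Rightarrow> rat poly" where "ri \<equiv> map_poly of_int"

lemma ri_add: "ri (X + Y) = ri X + ri Y"
  by (rule poly_eqI) (simp add: coeff_map_poly)
lemma ri_uminus: "ri (- X) = - ri X"
  by (rule poly_eqI) (simp add: coeff_map_poly)
lemma ri_diff: "ri (X - Y) = ri X - ri Y"
  by (rule poly_eqI) (simp add: coeff_map_poly)
lemma ri_smult: "ri (smult c X) = smult (of_int c) (ri X)"
  by (rule poly_eqI) (simp add: coeff_map_poly)
lemma ri_const: "ri [:c:] = [:of_int c:]"
  by (rule poly_eqI) (simp add: coeff_map_poly coeff_pCons split: nat.splits)
lemma ri_1: "ri 1 = 1" by simp
lemma ri_mult: "ri (X * Y) = ri X * ri Y"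
proof (induction X)
  case 0 then show ?case by simp
next
  case (pCons a X)
  have "pCons a X * Y = smult a Y + pCons 0 (X * Y)" by simp
  then show ?case using pCons
    by (simp add: ri_add ri_smult map_poly_pCons)
qed
lemma ri_pcompose: "ri (pcompose X Z) = pcompose (ri X) (ri Z)"
proof (induction X)
  case 0 then show ?case by simp
next
  case (pCons a X)
  then show ?case
    by (simp add: pcompose_pCons ri_add ri_mult ri_const map_poly_pCons)
qed
lemma ri_inj: "ri X = ri Y \<Longrightarrow> X = Y"
  by (metis (mono_tags) coeff_map_poly of_int_0 of_int_eq_iff poly_eqI)
lemma ri_eq0: "ri X = 0 \<longleftrightarrow> X = 0"
  using ri_inj by fastforce
lemma ri_lin: "ri [:c, 1:] = [:of_int c, 1:]"
  by (simp add: map_poly_pCons)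

lemma rof_add: "Y1 \<noteq> 0 \<Longrightarrow> Y2 \<noteq> 0 \<Longrightarrow>
  ratfun_of X1 Y1 + ratfun_of X2 Y2 = ratfun_of (X1 * Y2 + X2 * Y1) (Y1 * Y2)"
  by (simp add: ratfun_of_def ri_eq0 ri_add ri_mult)
lemma rof_diff: "Y1 \<noteq> 0 \<Longrightarrow> Y2 \<noteq> 0 \<Longrightarrow>
  ratfun_of X1 Y1 - ratfun_of X2 Y2 = ratfun_of (X1 * Y2 - X2 * Y1) (Y1 * Y2)"
  by (simp add: ratfun_of_def ri_eq0 ri_diff ri_mult)
lemma rof_mult: "ratfun_of X1 Y1 * ratfun_of X2 Y2 = ratfun_of (X1 * X2) (Y1 * Y2)"
  by (simp add: ratfun_of_def ri_mult)
lemma rof_minus: "- ratfun_of X Y = ratfun_of (- X) Y"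
  by (simp add: ratfun_of_def ri_uminus)
lemma rof_eq: "Y1 \<noteq> 0 \<Longrightarrow> Y2 \<noteq> 0 \<Longrightarrow>
  ratfun_of X1 Y1 = ratfun_of X2 Y2 \<longleftrightarrow> X1 * Y2 = X2 * Y1"
  by (simp add: ratfun_of_def eq_fract ri_eq0 ri_mult[symmetric]) (metis ri_inj)
lemma rof_int: "(of_int c :: ratfun) = ratfun_of [:c:] 1"
proof -
  have "(of_int c :: ratfun) = Fract (of_int c) 1"
  proof (cases c rule: int_cases)
    case (nonneg n) then show ?thesis by (simp add: of_nat_fract)
  next
    case (neg n) then show ?thesis
      by (simp only: of_int_minus of_int_of_nat_eq of_nat_fract minus_fract)
  qed
  then show ?thesis by (simp add: ratfun_of_def ri_const of_int_poly)
qed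
lemma rof_nat: "(of_nat c :: ratfun) = ratfun_of [:int c:] 1"
  by (metis of_int_of_nat_eq rof_int)
lemma rof_smult: "of_int c * ratfun_of X Y = ratfun_of (smult c X) Y"
  by (simp add: rof_int rof_mult)
lemma rof_0: "ratfun_of 0 Y = 0"
  by (simp add: ratfun_of_def eq_fract Zero_fract_def)
lemma rof_cancel: "Z \<noteq> 0 \<Longrightarrow> ratfun_of (Z * X) (Z * Y) = ratfun_of X Y"
  by (simp add: ratfun_of_def ri_mult mult_fract_cancel ri_eq0)



definition lin :: "int \<Rightarrow> rat poly" where "lin c = [:of_int c, 1:]"

definition sh :: "int \<Rightarrow> ratfun \<Rightarrow> ratfun" where
  "sh c x = (SOME y. \<exists>a b. b \<noteq> 0 \<and> x = Fract a b \<and> y = Fract (pcompose a (lin c)) (pcompose b (lin c)))"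

lemma deg_lin: "degree (lin c) = 1" by (simp add: lin_def)

lemma pcomp_lin_0: "pcompose b (lin c) = 0 \<longleftrightarrow> b = 0"
  by (rule pcompose_eq_0_iff) (simp add: deg_lin)

lemma sh_Fract: assumes "b \<noteq> 0"
  shows "sh c (Fract a b) = Fract (pcompose a (lin c)) (pcompose b (lin c))"
  unfolding sh_def
proof (rule someI2[where a = "Fract (pcompose a (lin c)) (pcompose b (lin c))"])
  show "\<exists>a' b'. b' \<noteq> 0 \<and> Fract a b = Fract a' b' \<and> Fract (pcompose a (lin c)) (pcompose b (lin c)) = Fract (pcompose a' (lin c)) (pcompose b' (lin c))"
    using assms by blast
next
  fix y assume "\<exists>a' b'. b' \<noteq> 0 \<and> Fract a b = Fract a' b' \<and> y = Fract (pcompose a' (lin c)) (pcompose b' (lin c))"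
  then obtain a' b' where b': "b' \<noteq> 0" "Fract a b = Fract a' b'" "y = Fract (pcompose a' (lin c)) (pcompose b' (lin c))" by blast
  then have "a * b' = a' * b" using assms by (simp add: eq_fract)
  then have "pcompose a (lin c) * pcompose b' (lin c) = pcompose a' (lin c) * pcompose b (lin c)"
    by (metis pcompose_mult)
  then show "y = Fract (pcompose a (lin c)) (pcompose b (lin c))"
    using b' assms by (simp add: eq_fract pcomp_lin_0)
qed

lemma sh_rof: "Y \<noteq> 0 \<Longrightarrow> sh c (ratfun_of X Y) = ratfun_of (pcompose X [:c,1:]) (pcompose Y [:c,1:])"
  by (simp add: ratfun_of_def sh_Fract ri_eq0 ri_pcompose ri_lin lin_def)

lemma sh_add: "sh c (x + y) = sh c x + sh c y"
proof (cases x; cases y)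
  fix a b a' b' assume "x = Fract a b" "b \<noteq> 0" "y = Fract a' b'" "b' \<noteq> 0"
  then show ?thesis
    by (simp add: sh_Fract pcomp_lin_0 pcompose_add pcompose_mult)
qed
lemma sh_mult: "sh c (x * y) = sh c x * sh c y"
proof (cases x; cases y)
  fix a b a' b' assume "x = Fract a b" "b \<noteq> 0" "y = Fract a' b'" "b' \<noteq> 0"
  then show ?thesis
    by (simp add: sh_Fract pcomp_lin_0 pcompose_add pcompose_mult)
qed
lemma sh_minus: "sh c (- x) = - sh c x"
proof (cases x)
  fix a b assume "x = Fract a b" "b \<noteq> 0"
  then show ?thesis
    by (simp add: sh_Fract pcomp_lin_0 pcompose_uminus)
qed
lemma sh_diff: "sh c (x - y) = sh c x - sh c y"
  by (metis diff_conv_add_uminus sh_add sh_minus)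
lemma sh_int: "sh c (of_int z) = of_int z"
  by (simp add: rof_int sh_rof pcompose_1)
lemma sh_0: "sh c 0 = 0"
  by (metis of_int_0 sh_int)
lemma sh_sh: "sh a (sh b x) = sh (a + b) x"
proof (cases x)
  fix u v assume "x = Fract u v" "v \<noteq> 0"
  moreover have "pcompose (lin b) (lin a) = lin (a + b)" by (simp add: lin_def pcompose_pCons algebra_simps)
  ultimately show ?thesis
    by (simp add: sh_Fract pcomp_lin_0 pcompose_assoc[symmetric])
qed
lemma sh_zero: "sh 0 x = x"
proof (cases x)
  fix u v assume "x = Fract u v" "v \<noteq> 0"
  then show ?thesis by (simp add: sh_Fract lin_def)
qed
lemma sh_sum: "finite A \<Longrightarrow> sh c (\<Sum>x\<in>A. f x) = (\<Sum>x\<in>A. sh c (f x))"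
  by (induction A rule: finite_induct) (simp_all add: sh_0 sh_add)



definition pz :: "nat \<Rightarrow> int poly \<Rightarrow> bool" where
  "pz p X \<longleftrightarrow> (\<forall>i. int p dvd coeff X i)"

lemma pz_nonzero_mod: "pz p X \<longleftrightarrow> \<not> nonzero_mod p X"
  by (simp add: pz_def nonzero_mod_def)

lemma pz_content: "pz p X \<longleftrightarrow> int p dvd content X"
  by (simp add: pz_def const_poly_dvd_iff[symmetric] const_poly_dvd_iff_dvd_content)

lemma pz_mult: assumes "prime p" "pz p (X * Y)" shows "pz p X \<or> pz p Y"
proof -
  have "int p dvd content X * content Y" using assms(2) by (simp add: pz_content content_mult)
  moreover have "prime (int p)" using assms(1) by simp
  ultimately show ?thesis by (simp add: pz_content prime_dvd_mult_iff)
qed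
lemma npz_mult: "prime p \<Longrightarrow> \<not> pz p X \<Longrightarrow> \<not> pz p Y \<Longrightarrow> \<not> pz p (X * Y)"
  using pz_mult by blast
lemma pz_0[simp]: "pz p 0" by (simp add: pz_def)
lemma npz_nz: "\<not> pz p Y \<Longrightarrow> Y \<noteq> 0" by auto
lemma pz_add: "pz p X \<Longrightarrow> pz p Y \<Longrightarrow> pz p (X + Y)" by (simp add: pz_def)
lemma pz_diff: "pz p X \<Longrightarrow> pz p Y \<Longrightarrow> pz p (X - Y)" by (simp add: pz_def)
lemma pz_uminus: "pz p (- X) \<longleftrightarrow> pz p X" by (simp add: pz_def)
lemma pz_smult: "pz p X \<Longrightarrow> pz p (smult c X)" by (simp add: pz_def)
lemma pz_smult_p: "int p dvd c \<Longrightarrow> pz p (smult c X)" by (simp add: pz_def)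
lemma pz_multL: "pz p X \<Longrightarrow> pz p (X * Y)"
  by (simp add: pz_content content_mult)
lemma pz_multR: "pz p Y \<Longrightarrow> pz p (X * Y)"
  by (simp add: pz_content content_mult)
lemma pz_ex: "pz p X \<Longrightarrow> \<exists>X'. X = smult (int p) X'"
proof -
  assume "pz p X"
  then have "[:int p:] dvd X" by (simp add: pz_def const_poly_dvd_iff)
  then obtain X' where "X = [:int p:] * X'" by (auto elim: dvdE)
  then show ?thesis by auto
qed
lemma pz_pcompose: "pz p X \<Longrightarrow> pz p (pcompose X Z)"
  by (metis pcompose_smult pz_ex pz_smult_p dvd_refl)
lemma npz_pcompose_lin: "\<not> pz p Y \<Longrightarrow> \<not> pz p (pcompose Y [:c,1:])"
proof
  assume "\<not> pz p Y" "pz p (pcompose Y [:c,1:])"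
  from this(2) have "pz p (pcompose (pcompose Y [:c,1:]) [:-c,1:])" by (rule pz_pcompose)
  moreover have "pcompose (pcompose Y [:c,1:]) [:-c,1:] = Y"
    by (simp add: pcompose_assoc[symmetric] pcompose_pCons)
  ultimately show False using \<open>\<not> pz p Y\<close> by simp
qed
lemma pz_lc: "pz p X \<Longrightarrow> int p dvd lead_coeff X" by (simp add: pz_def)

definition inO :: "nat \<Rightarrow> nat \<Rightarrow> ratfun \<Rightarrow> bool" where
  "inO p w G \<longleftrightarrow> (\<exists>X Y. \<not> pz p Y \<and> G = of_nat p ^ w * ratfun_of X Y)"

lemma inO_I: "\<not> pz p Y \<Longrightarrow> inO p w (of_nat p ^ w * ratfun_of X Y)"
  unfolding inO_def by blast
lemma inO_0: "prime p \<Longrightarrow> inO p w 0"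
  unfolding inO_def by (rule exI[of _ 0], rule exI[of _ 1]) (auto simp add: pz_def rof_0 dest: spec[of _ 0])
lemma inO_add: assumes "prime p" "inO p w G1" "inO p w G2" shows "inO p w (G1 + G2)"
proof -
  obtain X1 Y1 X2 Y2 where "\<not> pz p Y1" "\<not> pz p Y2" "G1 = of_nat p ^ w * ratfun_of X1 Y1"
    "G2 = of_nat p ^ w * ratfun_of X2 Y2" using assms unfolding inO_def by blast
  then have "\<not> pz p (Y1 * Y2) \<and> G1 + G2 = of_nat p ^ w * ratfun_of (X1 * Y2 + X2 * Y1) (Y1 * Y2)"
    by (simp add: npz_mult assms(1) rof_add npz_nz distrib_left[symmetric])
  then show ?thesis unfolding inO_def by blast
qed
lemma inO_uminus: "inO p w G \<Longrightarrow> inO p w (- G)"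
  unfolding inO_def by (metis minus_mult_right rof_minus)
lemma inO_diff: assumes "prime p" "inO p w G1" "inO p w G2" shows "inO p w (G1 - G2)"
  using inO_add[OF assms(1) assms(2) inO_uminus[OF assms(3)]] by simp
lemma inO_int: "inO p w G \<Longrightarrow> inO p w (of_int c * G)"
proof -
  assume "inO p w G"
  then obtain X Y where XY: "\<not> pz p Y" "G = of_nat p ^ w * ratfun_of X Y" unfolding inO_def by blast
  then have "of_int c * G = of_nat p ^ w * ratfun_of (smult c X) Y"
    by (simp add: rof_smult[symmetric] mult_ac)
  then show ?thesis using XY(1) by (simp add: inO_I)
qed
lemma pow_rof: "(of_nat p ^ w :: ratfun) = of_int (int p ^ w)" by simp
lemma inO_pow: "inO p w G \<Longrightarrow> inO p (w + e) (of_nat p ^ e * G)"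
proof -
  assume "inO p w G"
  then obtain X Y where XY: "\<not> pz p Y" "G = of_nat p ^ w * ratfun_of X Y" unfolding inO_def by blast
  then have "of_nat p ^ e * G = of_nat p ^ (w + e) * ratfun_of X Y"
    by (simp add: power_add mult_ac)
  then show ?thesis using XY(1) by (simp add: inO_I)
qed
lemma inO_mono: assumes "inO p w' G" "w \<le> w'" shows "inO p w G"
proof -
  obtain X Y where "\<not> pz p Y" "G = of_nat p ^ w' * ratfun_of X Y" using assms unfolding inO_def by blast
  moreover have "(of_nat p ^ w' :: ratfun) = of_nat p ^ w * of_int (int p ^ (w' - w))"
    using assms(2) by (simp add: power_add[symmetric])
  ultimately have "G = of_nat p ^ w * ratfun_of (smult (int p ^ (w' - w)) X) Y"
    by (simp add: rof_smult[symmetric] mult.assoc)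
  then show ?thesis using \<open>\<not> pz p Y\<close> by (simp add: inO_I)
qed
lemma inO_pz: "\<not> pz p Y \<Longrightarrow> pz p X \<Longrightarrow> inO p (w + 1) (of_nat p ^ w * ratfun_of X Y)"
proof -
  assume "\<not> pz p Y" "pz p X"
  then obtain X' where "X = smult (int p) X'" using pz_ex by blast
  then have "ratfun_of X Y = of_int (int p) * ratfun_of X' Y"
    by (simp only: rof_smult)
  then have e: "(of_nat p ^ w :: ratfun) * ratfun_of X Y = of_nat p ^ (w + 1) * ratfun_of X' Y"
    by (simp add: mult_ac)
  show ?thesis unfolding e by (rule inO_I) fact
qed
lemma inO_sh: "inO p w G \<Longrightarrow> inO p w (sh c G)"
proof -
  assume "inO p w G"
  then obtain X Y where XY: "\<not> pz p Y" "G = of_nat p ^ w * ratfun_of X Y" unfolding inO_def by blast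
  have "sh c (of_nat p ^ w) = (of_nat p ^ w :: ratfun)"
    using sh_int[of c "int p ^ w"] by simp
  then have "sh c G = of_nat p ^ w * ratfun_of (pcompose X [:c,1:]) (pcompose Y [:c,1:])"
    using XY by (simp add: sh_mult sh_rof npz_nz)
  then show ?thesis using XY(1) npz_pcompose_lin by (simp add: inO_I)
qed



lemma pCons_as: "pCons a (V :: int poly) = [:a:] + [:0,1:] * V"
  by simp

lemma smult_as: "smult c (V :: int poly) = [:c:] * V" by simp

lemma taylor: "\<exists>X2. pcompose X [:d,1:] = X + smult d (pderiv X) + smult (d^2) X2 \<and> (X2 = 0 \<or> degree X2 + 2 \<le> degree (X :: int poly))"
proof (induction X)
  case 0 then show ?case by simp
next
  case (pCons a X1)
  then obtain Z where Z: "pcompose X1 [:d,1:] = X1 + smult d (pderiv X1) + smult (d^2) Z"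
    "Z = 0 \<or> degree Z + 2 \<le> degree X1" by blast
  define X2 where "X2 = pderiv X1 + [:d,1:] * Z"
  have q: "[:d,1:] = [:d:] + [:0,1:]" by simp
  have "pcompose (pCons a X1) [:d,1:] = [:a:] + [:d,1:] * pcompose X1 [:d,1:]"
    by (simp add: pcompose_pCons)
  also have "\<dots> = pCons a X1 + smult d (pderiv (pCons a X1)) + smult (d^2) X2"
  proof -
    have r: "\<And>x D1 c2 :: int poly. c2 = [:d:] * [:d:] \<Longrightarrow> [:a:] + ([:d:] + x) * (X1 + [:d:]*D1 + c2*Z) = ([:a:] + x*X1) + [:d:]*(X1 + x*D1) + c2*(D1 + ([:d:]+x)*Z)"
      by (simp add: algebra_simps smult_add_right)
    have c2: "[:d^2:] = [:d:] * [:d:]" by (simp add: power2_eq_square)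
    show ?thesis unfolding Z(1) X2_def pderiv_pCons pCons_as[of a X1] pCons_as[of 0 "pderiv X1"] smult_as c2
      using r[of "[:d:] * [:d:]" "[:0,1:]" "pderiv X1"] by (simp add: pderiv_pCons)
  qed
  finally have eq: "pcompose (pCons a X1) [:d,1:] = pCons a X1 + smult d (pderiv (pCons a X1)) + smult (d^2) X2" .
  have "X2 = 0 \<or> degree X2 + 2 \<le> degree (pCons a X1)"
  proof (cases "X1 = 0")
    case True then show ?thesis using Z(2) by (simp add: X2_def)
  next
    case False
    then have dX: "degree (pCons a X1) = degree X1 + 1" by simp
    show ?thesis
    proof (cases "degree X1 = 0")
      case True
      then have "Z = 0" using Z(2) by simp
      moreover have "pderiv X1 = 0" using True by (simp add: pderiv_eq_0_iff)
      ultimately show ?thesis by (simp add: X2_def)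
    next
      case False
      have d1: "degree (pderiv X1) \<le> degree X1 - 1" by (simp add: degree_pderiv)
      have d2: "degree ([:d,1:] * Z) \<le> degree X1 - 1"
      proof (cases "Z = 0")
        case True then show ?thesis by simp
      next
        case False
        then have "degree ([:d,1:] * Z) \<le> 1 + degree Z"
          using degree_mult_le[of "[:d,1:]" Z] by simp
        then show ?thesis using Z(2) False by linarith
      qed
      have "degree X2 \<le> degree X1 - 1" unfolding X2_def
        using degree_add_le[OF d1 d2] .
      then show ?thesis using dX False by linarith
    qed
  qed
  then show ?case using eq by blast
qed

lemma shift_dvd: "\<exists>X3. pcompose X [:d,1:] = X + smult d (X3 :: int poly)"
proof -
  obtain X2 where "pcompose X [:d,1:] = X + smult d (pderiv X) + smult (d^2) X2"
    using taylor by blast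
  then have "pcompose X [:d,1:] = X + smult d (pderiv X + smult d X2)"
    by (simp add: smult_add_right power2_eq_square)
  then show ?thesis by blast
qed



definition pstep0 :: "nat \<Rightarrow> int \<Rightarrow> int \<Rightarrow> int poly \<times> int poly \<Rightarrow> int poly \<times> int poly" where
  "pstep0 e u d XY = (case XY of (X, Y) \<Rightarrow>
     if e = 0 then (pcompose X [:d,1:] * Y - X * pcompose Y [:d,1:], Y * pcompose Y [:d,1:])
     else (smult u (pderiv X * Y - X * pderiv Y), Y * Y))"

lemma ring_id1:
  fixes X Y X' Y' X2 Y2 cd cd2 :: "int poly"
  assumes "cd2 = cd * cd"
  shows "(X + cd * X' + cd2 * X2) * Y - X * (Y + cd * Y' + cd2 * Y2)
       = cd * (X' * Y - X * Y') + cd2 * (X2 * Y - X * Y2)"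
  using assms by (simp add: algebra_simps)

lemma ring_id2:
  fixes W V Y Y' Y2 cd cd2 :: "int poly"
  assumes "cd2 = cd * cd"
  shows "(cd * W + cd2 * V) * (Y * Y) - cd * W * ((Y + cd * Y' + cd2 * Y2) * Y)
       = cd2 * (V * Y * Y - W * Y * (Y' + cd * Y2))"
  using assms by (simp add: algebra_simps)

lemma step_main:
  assumes p: "prime p" and d: "d = int p ^ e * u" and Y: "\<not> pz p Y"
  shows "\<exists>E. inO p (e + 1) E \<and>
    sh d (ratfun_of X Y) - ratfun_of X Y = of_nat p ^ e * ratfun_of (fst (pstep0 e u d (X, Y))) (snd (pstep0 e u d (X, Y))) + E"
proof -
  have Y0: "Y \<noteq> 0" using Y by auto
  have Yd: "\<not> pz p (pcompose Y [:d,1:])" using Y by (rule npz_pcompose_lin)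
  have Yd0: "pcompose Y [:d,1:] \<noteq> 0" using Yd by auto
  have base: "sh d (ratfun_of X Y) - ratfun_of X Y
     = ratfun_of (pcompose X [:d,1:] * Y - X * pcompose Y [:d,1:]) (pcompose Y [:d,1:] * Y)"
    using Y0 Yd0 by (simp add: sh_rof rof_diff)
  show ?thesis
  proof (cases "e = 0")
    case True
    then show ?thesis using base inO_0[OF p] by (simp add: pstep0_def mult.commute)
  next
    case False
    obtain X2 where X2: "pcompose X [:d,1:] = X + smult d (pderiv X) + smult (d^2) X2"
      using taylor by blast
    obtain Y2 where Y2: "pcompose Y [:d,1:] = Y + smult d (pderiv Y) + smult (d^2) Y2"
      using taylor by blast
    define W where "W = pderiv X * Y - X * pderiv Y"
    define V where "V = X2 * Y - X * Y2"
    define M where "M = V * Y * Y - W * Y * (pderiv Y + smult d Y2)"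
    have c2: "[:d^2:] = [:d:] * [:d:]" by (simp add: power2_eq_square)
    have N: "pcompose X [:d,1:] * Y - X * pcompose Y [:d,1:] = smult d W + smult (d^2) V"
      unfolding X2 Y2 W_def V_def smult_as c2 by (rule ring_id1) simp
    have key: "(smult d W + smult (d^2) V) * (Y * Y) - smult d W * (pcompose Y [:d,1:] * Y)
        = smult (d^2) M"
      unfolding Y2 M_def smult_as c2 by (rule ring_id2) simp
    have YY: "\<not> pz p (Y * Y)" using Y p by (simp add: npz_mult)
    have D: "\<not> pz p (pcompose Y [:d,1:] * Y * (Y * Y))" using Y Yd p by (simp add: npz_mult)
    have "sh d (ratfun_of X Y) - ratfun_of X Y - of_int d * ratfun_of W (Y * Y)
       = ratfun_of (smult d W + smult (d^2) V) (pcompose Y [:d,1:] * Y) - ratfun_of (smult d W) (Y * Y)"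
      unfolding base N by (simp add: rof_smult)
    also have "\<dots> = ratfun_of (smult (d^2) M) (pcompose Y [:d,1:] * Y * (Y * Y))"
      using Y0 Yd0 rof_diff[of "pcompose Y [:d,1:] * Y" "Y * Y" "smult d W + smult (d^2) V" "smult d W"] by (simp only: key no_zero_divisors mult_eq_0_iff, simp)
    also have "\<dots> = of_nat p ^ (2 * e) * (of_int (u^2) * ratfun_of M (pcompose Y [:d,1:] * Y * (Y * Y)))"
      by (simp add: rof_smult[symmetric] d power_mult_distrib power_mult mult_ac)
    finally have E: "sh d (ratfun_of X Y) - ratfun_of X Y - of_int d * ratfun_of W (Y * Y)
       = of_nat p ^ (2 * e) * (of_int (u^2) * ratfun_of M (pcompose Y [:d,1:] * Y * (Y * Y)))" .
    have "inO p (2 * e) (of_nat p ^ (2 * e) * (of_int (u^2) * ratfun_of M (pcompose Y [:d,1:] * Y * (Y * Y))))"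
      using inO_int[OF inO_I[OF D, of "0" M], of "u^2"] inO_pow[of p 0 _ "2 * e"] by simp
    then have EI: "inO p (e + 1) (sh d (ratfun_of X Y) - ratfun_of X Y - of_int d * ratfun_of W (Y * Y))"
      unfolding E by (rule inO_mono) (use False in simp)
    have "of_int d * ratfun_of W (Y * Y) = of_nat p ^ e * ratfun_of (smult u W) (Y * Y)"
      by (simp add: rof_smult[symmetric] d mult_ac)
    then have "sh d (ratfun_of X Y) - ratfun_of X Y = of_nat p ^ e * ratfun_of (fst (pstep0 e u d (X, Y))) (snd (pstep0 e u d (X, Y)))
       + (sh d (ratfun_of X Y) - ratfun_of X Y - of_int d * ratfun_of W (Y * Y))"
      using False by (simp add: pstep0_def W_def)
    then show ?thesis using EI by blast
  qed
qed



definition Dop :: "int \<Rightarrow> int \<Rightarrow> ratfun \<Rightarrow> ratfun" where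
  "Dop a b G = sh a G - sh b G"

lemma Dop_add: "Dop a b (x + y) = Dop a b x + Dop a b y"
  by (simp add: Dop_def sh_add)
lemma Dop_minus: "Dop a b (- x) = - Dop a b x"
  by (simp add: Dop_def sh_minus)
lemma Dop_0: "Dop a b 0 = 0"
  by (simp add: Dop_def sh_0)
lemma Dop_int: "Dop a b (of_int c * x) = of_int c * Dop a b x"
  by (simp add: Dop_def sh_mult sh_int algebra_simps)
lemma Dop_pow: "Dop a b (of_nat p ^ w * x) = of_nat p ^ w * Dop a b x"
  using Dop_int[of a b "int p ^ w" x] by simp
lemma Dop_sum: "finite A \<Longrightarrow> Dop a b (\<Sum>x\<in>A. f x) = (\<Sum>x\<in>A. Dop a b (f x))"
  by (induction A rule: finite_induct) (simp_all add: Dop_0 Dop_add)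
lemma Dop_same: "Dop a a x = 0" by (simp add: Dop_def)

definition pstep :: "nat \<Rightarrow> int \<Rightarrow> int \<Rightarrow> int \<Rightarrow> int poly \<times> int poly \<Rightarrow> int poly \<times> int poly" where
  "pstep e u a d XY = (case pstep0 e u d XY of (N, D) \<Rightarrow> (- pcompose N [:a,1:], pcompose D [:a,1:]))"

lemma pstep_npz: assumes p: "prime p" and Y: "\<not> pz p Y"
  shows "\<not> pz p (snd (pstep e u a d (X, Y)))"
proof -
  have "\<not> pz p (snd (pstep0 e u d (X, Y)))"
    using Y p npz_pcompose_lin[OF Y] by (simp add: pstep0_def npz_mult)
  then show ?thesis by (simp add: pstep_def case_prod_unfold npz_pcompose_lin)
qed

lemma Dop_rof:
  assumes p: "prime p" and d: "b - a = int p ^ e * u" and Y: "\<not> pz p Y"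
  shows "\<exists>E. inO p (e + 1) E \<and>
    Dop a b (ratfun_of X Y) = of_nat p ^ e * ratfun_of (fst (pstep e u a (b - a) (X, Y))) (snd (pstep e u a (b - a) (X, Y))) + E"
proof -
  obtain E where E: "inO p (e + 1) E" and eq: "sh (b - a) (ratfun_of X Y) - ratfun_of X Y
      = of_nat p ^ e * ratfun_of (fst (pstep0 e u (b - a) (X, Y))) (snd (pstep0 e u (b - a) (X, Y))) + E"
    using step_main[OF p d Y] by blast
  obtain N D where ND: "pstep0 e u (b - a) (X, Y) = (N, D)" by fastforce
  have D: "\<not> pz p D" using ND Y p npz_pcompose_lin[OF Y] by (auto simp add: pstep0_def npz_mult split: if_splits)
  have shp: "sh a (of_nat p ^ e) = (of_nat p ^ e :: ratfun)"
    using sh_int[of a "int p ^ e"] by simp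
  have "Dop a b (ratfun_of X Y) = - sh a (sh (b - a) (ratfun_of X Y) - ratfun_of X Y)"
    by (simp add: Dop_def sh_diff sh_sh)
  also have "\<dots> = of_nat p ^ e * ratfun_of (- pcompose N [:a,1:]) (pcompose D [:a,1:]) + (- sh a E)"
    unfolding eq ND using D by (simp add: sh_add sh_mult shp sh_rof npz_nz rof_minus[symmetric])
  finally show ?thesis using E inO_sh inO_uminus ND by (auto simp add: pstep_def)
qed

lemma Dop_inO:
  assumes p: "prime p" and d: "b - a = int p ^ e * u" and G: "inO p w G"
  shows "inO p (w + e) (Dop a b G)"
proof -
  obtain X Y where XY: "\<not> pz p Y" "G = of_nat p ^ w * ratfun_of X Y" using G unfolding inO_def by blast
  obtain E where E: "inO p (e + 1) E" and eq: "Dop a b (ratfun_of X Y) =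
     of_nat p ^ e * ratfun_of (fst (pstep e u a (b - a) (X, Y))) (snd (pstep e u a (b - a) (X, Y))) + E"
    using Dop_rof[OF p d XY(1)] by blast
  have "inO p e (Dop a b (ratfun_of X Y))"
    unfolding eq
    by (rule inO_add[OF p]) (auto intro: inO_I[OF pstep_npz[OF p XY(1)]] inO_mono[OF E])
  then have "inO p (e + w) (of_nat p ^ w * Dop a b (ratfun_of X Y))" by (rule inO_pow)
  then show ?thesis using XY(2) by (simp add: Dop_pow add.commute)
qed



primrec Fit :: "(nat \<Rightarrow> nat \<Rightarrow> int) \<Rightarrow> nat \<Rightarrow> ratfun \<Rightarrow> ratfun" where
  "Fit hh 0 G = G"
| "Fit hh (Suc n) G = Dop (hh (Suc n) 0) (hh (Suc n) 1) (Fit hh n G)"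

lemma PiE_sum_insert:
  assumes "m \<notin> S" "finite S"
  shows "(\<Sum>j \<in> PiE (insert m S) (\<lambda>_. {0,1::nat}). f j)
       = (\<Sum>g \<in> PiE S (\<lambda>_. {0,1::nat}). f (g(m := 0)) + f (g(m := 1)))"
proof -
  have "(\<Sum>j \<in> PiE (insert m S) (\<lambda>_. {0,1::nat}). f j)
      = (\<Sum>yg \<in> {0,1::nat} \<times> PiE S (\<lambda>_. {0,1::nat}). f ((\<lambda>(y, g). g(m := y)) yg))"
    unfolding PiE_insert_eq
    by (rule sum.reindex[OF inj_combinator[OF assms(1)], unfolded comp_def])
  also have "\<dots> = (\<Sum>y\<in>{0,1::nat}. \<Sum>g \<in> PiE S (\<lambda>_. {0,1::nat}). f (g(m := y)))"
    by (subst sum.cartesian_product) (simp add: case_prod_unfold)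
  also have "\<dots> = (\<Sum>g \<in> PiE S (\<lambda>_. {0,1::nat}). f (g(m := 0)) + f (g(m := 1)))"
    by (simp add: sum.distrib)
  finally show ?thesis .
qed

lemma sum_identity:
  "(\<Sum>j \<in> PiE {1..n} (\<lambda>_. {0,1::nat}). (-1) ^ (\<Sum>i=1..n. j i) * sh (\<Sum>i=1..n. hh i (j i)) G) = Fit hh n G"
proof (induction n)
  case 0 then show ?case by (simp add: sh_zero)
next
  case (Suc n)
  define m where "m = Suc n"
  have ins: "{1..Suc n} = insert m {1..n}" unfolding m_def by auto
  have mS: "m \<notin> {1..n}" unfolding m_def by auto
  have a: "\<And>g y. (\<Sum>i=1..n. (g(m := y)) i) = (\<Sum>i=1..n. g i)"
    by (rule sum.cong) (auto simp: m_def)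
  have b: "\<And>g y. (\<Sum>i=1..n. hh i ((g(m := y)) i)) = (\<Sum>i=1..n. hh i (g i))"
    by (rule sum.cong) (auto simp: m_def)
  have "(\<Sum>j \<in> PiE {1..Suc n} (\<lambda>_. {0,1::nat}). (-1) ^ (\<Sum>i=1..Suc n. j i) * sh (\<Sum>i=1..Suc n. hh i (j i)) G)
      = (\<Sum>j \<in> PiE (insert m {1..n}) (\<lambda>_. {0,1::nat}). (-1) ^ (\<Sum>i\<in>insert m {1..n}. j i) * sh (\<Sum>i\<in>insert m {1..n}. hh i (j i)) G)"
    unfolding ins ..
  also have "\<dots> = (\<Sum>g \<in> PiE {1..n} (\<lambda>_. {0,1::nat}).
      (-1) ^ (\<Sum>i=1..n. g i) * (sh (hh m 0 + (\<Sum>i=1..n. hh i (g i))) G - sh (hh m 1 + (\<Sum>i=1..n. hh i (g i))) G))"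
  proof (subst PiE_sum_insert[OF mS], simp, rule sum.cong[OF refl])
    fix g :: "nat \<Rightarrow> nat"
    have c1: "\<And>y::nat. (\<Sum>i\<in>insert m {1..n}. (g(m:=y)) i) = y + (\<Sum>i=1..n. g i)"
      by (subst sum.insert[OF _ mS], simp, simp only: a fun_upd_same)
    have c2: "\<And>y::nat. (\<Sum>i\<in>insert m {1..n}. hh i ((g(m:=y)) i)) = hh m y + (\<Sum>i=1..n. hh i (g i))"
      by (subst sum.insert[OF _ mS], simp, simp only: b fun_upd_same)
    show "(-1) ^ (\<Sum>i\<in>insert m {1..n}. (g(m:=0)) i) * sh (\<Sum>i\<in>insert m {1..n}. hh i ((g(m:=0)) i)) G +
          (-1) ^ (\<Sum>i\<in>insert m {1..n}. (g(m:=1)) i) * sh (\<Sum>i\<in>insert m {1..n}. hh i ((g(m:=1)) i)) G =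
          (-1) ^ (\<Sum>i=1..n. g i) * (sh (hh m 0 + (\<Sum>i=1..n. hh i (g i))) G - sh (hh m 1 + (\<Sum>i=1..n. hh i (g i))) G)"
      unfolding c1 c2 by (simp add: algebra_simps)
  qed
  also have "\<dots> = (\<Sum>g \<in> PiE {1..n} (\<lambda>_. {0,1::nat}).
      Dop (hh m 0) (hh m 1) (of_int ((-1) ^ (\<Sum>i=1..n. g i)) * sh (\<Sum>i=1..n. hh i (g i)) G))"
    by (rule sum.cong[OF refl], subst Dop_int, simp add: Dop_def sh_sh)
  also have "\<dots> = Dop (hh m 0) (hh m 1) (Fit hh n G)"
    unfolding Suc.IH[symmetric] by (subst Dop_sum) (auto intro: finite_PiE)
  finally show ?case by (simp add: m_def)
qed



abbreviation rofp :: "int poly \<times> int poly \<Rightarrow> ratfun" where "rofp P \<equiv> ratfun_of (fst P) (snd P)"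

primrec pit :: "(nat \<Rightarrow> nat) \<Rightarrow> (nat \<Rightarrow> int) \<Rightarrow> (nat \<Rightarrow> nat \<Rightarrow> int) \<Rightarrow> nat \<Rightarrow> int poly \<times> int poly \<Rightarrow> int poly \<times> int poly" where
  "pit e u hh 0 P = P"
| "pit e u hh (Suc n) P = pstep (e (Suc n)) (u (Suc n)) (hh (Suc n) 0) (hh (Suc n) 1 - hh (Suc n) 0) (pit e u hh n P)"

lemma pit_npz: "prime p \<Longrightarrow> \<not> pz p (snd P) \<Longrightarrow> \<not> pz p (snd (pit e u hh n P))"
proof (induction n)
  case 0 then show ?case by simp
next
  case (Suc n)
  then show ?case using pstep_npz[of p "snd (pit e u hh n P)" _ _ _ _ "fst (pit e u hh n P)"] by simp
qed

lemma iter: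
  assumes p: "prime p" and d: "\<forall>i\<in>{1..n}. hh i 1 - hh i 0 = int p ^ e i * u i"
    and Y1: "\<not> pz p (snd P1)" and Y2: "\<not> pz p (snd P2)" and E: "inO p 1 E"
  shows "\<exists>E'. inO p ((\<Sum>i=1..n. e i) + 1) E' \<and>
    Fit hh n (rofp P1 + rofp P2 + E) = of_nat p ^ (\<Sum>i=1..n. e i) * (rofp (pit e u hh n P1) + rofp (pit e u hh n P2)) + E'"
  using d
proof (induction n)
  case 0 then show ?case using E by auto
next
  case (Suc n)
  define S where "S = (\<Sum>i=1..n. e i)"
  define m where "m = Suc n"
  from Suc.prems have dn: "\<forall>i\<in>{1..n}. hh i 1 - hh i 0 = int p ^ e i * u i" by auto
  from Suc.prems have dm: "hh m 1 - hh m 0 = int p ^ e m * u m" by (auto simp: m_def)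
  obtain E' where E': "inO p (S + 1) E'" and F: "Fit hh n (rofp P1 + rofp P2 + E)
     = of_nat p ^ S * (rofp (pit e u hh n P1) + rofp (pit e u hh n P2)) + E'"
    using Suc.IH[OF dn] unfolding S_def by blast
  define Q1 where "Q1 = pit e u hh n P1"
  define Q2 where "Q2 = pit e u hh n P2"
  have nQ1: "\<not> pz p (snd Q1)" unfolding Q1_def using pit_npz[OF p Y1] .
  have nQ2: "\<not> pz p (snd Q2)" unfolding Q2_def using pit_npz[OF p Y2] .
  obtain E1 where E1: "inO p (e m + 1) E1" and D1: "Dop (hh m 0) (hh m 1) (rofp Q1)
      = of_nat p ^ e m * rofp (pstep (e m) (u m) (hh m 0) (hh m 1 - hh m 0) Q1) + E1"
    using Dop_rof[OF p dm nQ1, of "fst Q1"] by auto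
  obtain E2 where E2: "inO p (e m + 1) E2" and D2: "Dop (hh m 0) (hh m 1) (rofp Q2)
      = of_nat p ^ e m * rofp (pstep (e m) (u m) (hh m 0) (hh m 1 - hh m 0) Q2) + E2"
    using Dop_rof[OF p dm nQ2, of "fst Q2"] by auto
  have DE: "inO p (S + 1 + e m) (Dop (hh m 0) (hh m 1) E')"
    by (rule Dop_inO[OF p dm E'])
  have "Fit hh (Suc n) (rofp P1 + rofp P2 + E)
     = of_nat p ^ S * (Dop (hh m 0) (hh m 1) (rofp Q1) + Dop (hh m 0) (hh m 1) (rofp Q2)) + Dop (hh m 0) (hh m 1) E'"
    by (simp add: F m_def Q1_def Q2_def Dop_add Dop_pow)
  also have "\<dots> = of_nat p ^ (S + e m) * (rofp (pstep (e m) (u m) (hh m 0) (hh m 1 - hh m 0) Q1)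
        + rofp (pstep (e m) (u m) (hh m 0) (hh m 1 - hh m 0) Q2))
      + (of_nat p ^ S * E1 + of_nat p ^ S * E2 + Dop (hh m 0) (hh m 1) E')"
    unfolding D1 D2 by (simp add: algebra_simps power_add)
  finally have eq: "Fit hh (Suc n) (rofp P1 + rofp P2 + E) = \<dots>" .
  have "inO p (S + e m + 1) (of_nat p ^ S * E1 + of_nat p ^ S * E2 + Dop (hh m 0) (hh m 1) E')"
  proof -
    have a: "inO p (S + e m + 1) (of_nat p ^ S * E1)" using inO_pow[OF E1, of S] by (simp add: ac_simps)
    have b: "inO p (S + e m + 1) (of_nat p ^ S * E2)" using inO_pow[OF E2, of S] by (simp add: ac_simps)
    have c: "inO p (S + e m + 1) (Dop (hh m 0) (hh m 1) E')" using DE by (simp add: ac_simps)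
    show ?thesis by (intro inO_add[OF p] a b c)
  qed
  moreover have "(\<Sum>i=1..Suc n. e i) = S + e m" by (simp add: S_def m_def)
  ultimately show ?case using eq by (auto simp: m_def Q1_def Q2_def)
qed



lemma coeff_mult_le: "degree A \<le> a \<Longrightarrow> degree B \<le> b \<Longrightarrow> coeff (A * B) (a + b) = coeff A a * coeff (B :: int poly) b"
proof (induction A arbitrary: a)
  case 0 then show ?case by simp
next
  case (pCons c A1)
  show ?case
  proof (cases "a = 0")
    case True
    then have "A1 = 0" using pCons.prems(1) pCons.hyps by (auto simp: degree_pCons_eq_if split: if_splits)
    then show ?thesis using True by simp
  next
    case False
    then obtain a1 where a1: "a = Suc a1" by (cases a) auto
    have "degree A1 \<le> a1" using pCons.prems(1) a1 by (auto simp: degree_pCons_eq_if split: if_splits)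
    then have IH: "coeff (A1 * B) (a1 + b) = coeff A1 a1 * coeff B b" using pCons.IH pCons.prems(2) by blast
    have "coeff B (a + b) = 0" using pCons.prems(2) a1 by (intro coeff_eq_0) simp
    then show ?thesis using IH a1 by simp
  qed
qed

definition good :: "nat \<Rightarrow> int poly \<times> int poly \<Rightarrow> bool" where
  "good p P \<longleftrightarrow> \<not> int p dvd lead_coeff (fst P) \<and> \<not> int p dvd lead_coeff (snd P)"

definition ordi :: "int poly \<times> int poly \<Rightarrow> int" where
  "ordi P = int (degree (fst P)) - int (degree (snd P))"

lemma deriv_coeff:
  fixes X :: "int poly"
  shows "coeff (pderiv X * Y) (degree X + degree Y - 1) = int (degree X) * lead_coeff X * lead_coeff Y
     \<and> (\<forall>i > degree X + degree Y - 1. coeff (pderiv X * Y) i = 0)"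
proof (cases "degree X = 0")
  case True
  then have "pderiv X = 0" by (simp add: pderiv_eq_0_iff)
  then show ?thesis using True by simp
next
  case False
  have dd: "degree (pderiv X) \<le> degree X - 1" by (simp add: degree_pderiv)
  have "coeff (pderiv X * Y) (degree X - 1 + degree Y) = coeff (pderiv X) (degree X - 1) * lead_coeff Y"
    by (rule coeff_mult_le[OF dd]) simp
  also have "coeff (pderiv X) (degree X - 1) = int (degree X) * lead_coeff X"
    using False by (simp add: coeff_pderiv)
  finally have c0: "coeff (pderiv X * Y) (degree X - 1 + degree Y) = int (degree X) * lead_coeff X * lead_coeff Y"
    by simp
  have idx: "degree X - 1 + degree Y = degree X + degree Y - 1" using False by arith
  have c: "coeff (pderiv X * Y) (degree X + degree Y - 1) = int (degree X) * lead_coeff X * lead_coeff Y"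
    using c0 unfolding idx .
  have "degree (pderiv X * Y) \<le> degree X - 1 + degree Y"
    using degree_mult_le[of "pderiv X" Y] dd by linarith
  then have "\<forall>i > degree X + degree Y - 1. coeff (pderiv X * Y) i = 0"
    using False by (auto intro: coeff_eq_0)
  then show ?thesis using c by blast
qed

lemma W_coeff:
  fixes X Y :: "int poly"
  shows "coeff (pderiv X * Y - X * pderiv Y) (degree X + degree Y - 1) = (int (degree X) - int (degree Y)) * lead_coeff X * lead_coeff Y
     \<and> (\<forall>i > degree X + degree Y - 1. coeff (pderiv X * Y - X * pderiv Y) i = 0)"
proof -
  have a: "coeff (pderiv X * Y) (degree X + degree Y - 1) = int (degree X) * lead_coeff X * lead_coeff Y"
      "\<forall>i > degree X + degree Y - 1. coeff (pderiv X * Y) i = 0" using deriv_coeff[of X Y] by auto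
  have b: "coeff (pderiv Y * X) (degree Y + degree X - 1) = int (degree Y) * lead_coeff Y * lead_coeff X"
      "\<forall>i > degree Y + degree X - 1. coeff (pderiv Y * X) i = 0" using deriv_coeff[of Y X] by auto
  have e1: "X * pderiv Y = pderiv Y * X" by (rule mult.commute)
  have e2: "degree Y + degree X - 1 = degree X + degree Y - 1" by simp
  have b1: "coeff (X * pderiv Y) (degree X + degree Y - 1) = int (degree Y) * lead_coeff X * lead_coeff Y"
    using b(1) unfolding e1 e2 by simp
  have b2: "\<forall>i > degree X + degree Y - 1. coeff (X * pderiv Y) i = 0" using b(2) unfolding e1 e2 .
  show ?thesis using a b1 b2 by (simp add: coeff_diff left_diff_distrib)
qed



lemma V_coeff:
  fixes X Y X2 Y2 :: "int poly"
  assumes "X2 = 0 \<or> degree X2 + 2 \<le> degree X" "Y2 = 0 \<or> degree Y2 + 2 \<le> degree Y"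
  shows "\<forall>i \<ge> degree X + degree Y - 1. coeff (X2 * Y - X * Y2) i = 0"
proof (intro allI impI)
  fix i assume i: "i \<ge> degree X + degree Y - 1"
  have "coeff (X2 * Y) i = 0"
  proof (cases "X2 = 0")
    case False
    then have "degree (X2 * Y) < i" using assms(1) i degree_mult_le[of X2 Y] by linarith
    then show ?thesis by (rule coeff_eq_0)
  qed simp
  moreover have "coeff (X * Y2) i = 0"
  proof (cases "Y2 = 0")
    case False
    then have "degree (X * Y2) < i" using assms(2) i degree_mult_le[of X Y2] by linarith
    then show ?thesis by (rule coeff_eq_0)
  qed simp
  ultimately show "coeff (X2 * Y - X * Y2) i = 0" by (simp add: coeff_diff)
qed

lemma N_coeff:
  fixes X Y :: "int poly"
  assumes d: "d = int p ^ e * u"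
  defines "N \<equiv> fst (pstep0 e u d (X, Y))"
  shows "coeff N (degree X + degree Y - 1) = u * ((int (degree X) - int (degree Y)) * lead_coeff X * lead_coeff Y)
     \<and> (\<forall>i > degree X + degree Y - 1. coeff N i = 0)"
proof -
  define W where "W = pderiv X * Y - X * pderiv Y"
  have Wc: "coeff W (degree X + degree Y - 1) = (int (degree X) - int (degree Y)) * lead_coeff X * lead_coeff Y"
    "\<forall>i > degree X + degree Y - 1. coeff W i = 0" using W_coeff[of X Y] unfolding W_def by auto
  show ?thesis
  proof (cases "e = 0")
    case False
    then have "N = smult u W" by (simp add: N_def pstep0_def W_def)
    then show ?thesis using Wc by simp
  next
    case True
    then have du: "d = u" using d by simp
    obtain X2 where X2: "pcompose X [:d,1:] = X + smult d (pderiv X) + smult (d^2) X2"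
      "X2 = 0 \<or> degree X2 + 2 \<le> degree X" using taylor by blast
    obtain Y2 where Y2: "pcompose Y [:d,1:] = Y + smult d (pderiv Y) + smult (d^2) Y2"
      "Y2 = 0 \<or> degree Y2 + 2 \<le> degree Y" using taylor by blast
    define V where "V = X2 * Y - X * Y2"
    have c2: "[:d^2:] = [:d:] * [:d:]" by (simp add: power2_eq_square)
    have Neq: "pcompose X [:d,1:] * Y - X * pcompose Y [:d,1:] = smult d W + smult (d^2) V"
      unfolding X2(1) Y2(1) W_def V_def smult_as c2 by (rule ring_id1) simp
    have "N = smult d W + smult (d^2) V" using True Neq by (simp add: N_def pstep0_def)
    moreover have Vc: "\<forall>i \<ge> degree X + degree Y - 1. coeff V i = 0"
      unfolding V_def by (rule V_coeff[OF X2(2) Y2(2)])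
    ultimately show ?thesis using Wc du by (simp add: coeff_add)
  qed
qed

lemma D_props:
  fixes X Y :: "int poly" and e :: nat and u d :: int
  assumes "Y \<noteq> 0"
  defines "D \<equiv> snd (pstep0 e u d (X, Y))"
  shows "degree D = 2 * degree Y \<and> lead_coeff D = lead_coeff Y ^ 2"
proof -
  have dY: "degree (pcompose Y [:d,1:]) = degree Y" by (simp add: degree_pcompose)
  have lY: "lead_coeff (pcompose Y [:d,1:]) = lead_coeff Y" by (subst lead_coeff_comp) simp_all
  have nz: "pcompose Y [:d,1:] \<noteq> 0" using assms(1) by (simp add: pcompose_eq_0_iff)
  have a1: "coeff (Y * pcompose Y [:d,1:]) (degree Y + degree Y) = lead_coeff Y * lead_coeff Y"
    using coeff_mult_degree_sum[of Y "pcompose Y [:d,1:]"] dY lY by simp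
  have a2: "coeff (Y * Y) (degree Y + degree Y) = lead_coeff Y * lead_coeff Y"
    using coeff_mult_degree_sum[of Y Y] by simp
  show ?thesis
    using assms(1) nz dY a1 a2 by (auto simp add: D_def pstep0_def degree_mult_eq power2_eq_square)
qed

lemma pstep_good:
  fixes X Y :: "int poly"
  assumes p: "prime p" and g: "good p (X, Y)" and o: "\<not> int p dvd ordi (X, Y)"
    and u: "\<not> int p dvd u" and d: "d = int p ^ e * u"
  shows "good p (pstep e u a d (X, Y)) \<and> ordi (pstep e u a d (X, Y)) = ordi (X, Y) - 1"
proof -
  have pp: "prime (int p)" using p by simp
  define N where "N = fst (pstep0 e u d (X, Y))"
  define D where "D = snd (pstep0 e u d (X, Y))"
  define n0 where "n0 = degree X + degree Y - 1"
  have lX: "\<not> int p dvd lead_coeff X" and lY: "\<not> int p dvd lead_coeff Y" using g by (auto simp: good_def)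
  then have X0: "X \<noteq> 0" and Y0: "Y \<noteq> 0" by auto
  have ne: "int (degree X) \<noteq> int (degree Y)" using o by (auto simp: ordi_def)
  then have n0pos: "degree X + degree Y \<ge> 1" by linarith
  have Nc: "coeff N n0 = u * ((int (degree X) - int (degree Y)) * lead_coeff X * lead_coeff Y)"
    "\<forall>i > n0. coeff N i = 0" using N_coeff[OF d, of X Y] unfolding N_def n0_def by auto
  have ndvd: "\<not> int p dvd coeff N n0"
    unfolding Nc(1) using u lX lY o pp by (simp add: prime_dvd_mult_iff ordi_def)
  then have "coeff N n0 \<noteq> 0" by auto
  then have dN: "degree N = n0" using Nc(2) by (intro antisym degree_le le_degree) auto
  have lN: "\<not> int p dvd lead_coeff N" using ndvd dN by simp
  have Dp: "degree D = 2 * degree Y" "lead_coeff D = lead_coeff Y ^ 2"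
    using D_props[OF Y0, of e u d X] unfolding D_def by auto
  have lD: "\<not> int p dvd lead_coeff D" using Dp(2) lY pp by (simp add: prime_dvd_power_iff prime_gt_0_int)
  have P: "pstep e u a d (X, Y) = (- pcompose N [:a,1:], pcompose D [:a,1:])"
    by (simp add: pstep_def N_def D_def case_prod_unfold)
  have lc: "\<And>Z :: int poly. lead_coeff (pcompose Z [:a,1:]) = lead_coeff Z" by (subst lead_coeff_comp) simp_all
  have s1: "degree (- pcompose N [:a,1:]) = degree N" "lead_coeff (- pcompose N [:a,1:]) = - lead_coeff N"
    using lc[of N] by (simp_all add: degree_pcompose)
  have s2: "degree (pcompose D [:a,1:]) = degree D" "lead_coeff (pcompose D [:a,1:]) = lead_coeff D"
    using lc[of D] by (simp_all add: degree_pcompose)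
  have g1: "\<not> int p dvd lead_coeff (- pcompose N [:a,1:])" unfolding s1(2) using lN by simp
  have g2: "\<not> int p dvd lead_coeff (pcompose D [:a,1:])" unfolding s2(2) using lD .
  have o1: "int (degree (- pcompose N [:a,1:])) - int (degree (pcompose D [:a,1:])) = ordi (X, Y) - 1"
    unfolding s1(1) s2(1) dN Dp(1) n0_def ordi_def using n0pos by simp
  show ?thesis unfolding P good_def using g1 g2 o1 by (simp add: ordi_def)
qed

lemma pstep_const: assumes "degree Y = 0" shows "degree (snd (pstep e u a d (X, Y))) = 0"
proof -
  have "degree (snd (pstep0 e u d (X, Y))) = 0"
    using assms degree_mult_le[of Y "pcompose Y [:d,1:]"] degree_mult_le[of Y Y]
    by (simp add: pstep0_def degree_pcompose)
  then show ?thesis by (simp add: pstep_def case_prod_unfold degree_pcompose)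
qed



lemma pit_good:
  assumes p: "prime p" and du: "\<forall>i\<in>{1..n}. \<not> int p dvd u i \<and> hh i 1 - hh i 0 = int p ^ e i * u i"
    and g: "good p P" and o: "\<forall>j<n. \<not> int p dvd (ordi P - int j)"
  shows "good p (pit e u hh n P) \<and> ordi (pit e u hh n P) = ordi P - int n"
  using du o
proof (induction n)
  case 0 then show ?case using g by simp
next
  case (Suc n)
  have IH: "good p (pit e u hh n P) \<and> ordi (pit e u hh n P) = ordi P - int n"
    using Suc.IH Suc.prems by auto
  obtain X Y where XY: "pit e u hh n P = (X, Y)" by fastforce
  have um: "\<not> int p dvd u (Suc n)" "hh (Suc n) 1 - hh (Suc n) 0 = int p ^ e (Suc n) * u (Suc n)"
    using Suc.prems(1) by auto
  have on: "\<not> int p dvd ordi (X, Y)" using IH Suc.prems(2) XY by auto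
  show ?case
    using pstep_good[OF p _ on um(1) um(2), of "hh (Suc n) 0"] IH XY by simp
qed

lemma pit_const: "degree (snd P) = 0 \<Longrightarrow> degree (snd (pit e u hh n P)) = 0"
proof (induction n)
  case 0 then show ?case by simp
next
  case (Suc n)
  then show ?case using pstep_const[of "snd (pit e u hh n P)" _ _ _ _ "fst (pit e u hh n P)"] by simp
qed

definition C :: "rat \<Rightarrow> ratfun" where "C r = Fract [:r:] 1"

lemma C_mult: "C r * C s = C (r * s)" by (simp add: C_def ac_simps)
lemma C_1: "C 1 = 1" by (simp add: C_def One_fract_def one_pCons)
lemma C_rof: "C (of_int z) = ratfun_of [:z:] 1" by (simp add: C_def ratfun_of_def ri_const)
lemma C_pow: "C (of_nat p ^ v) = of_nat p ^ v"
proof -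
  have "(of_nat p ^ v :: ratfun) = of_nat (p ^ v)" by simp
  also have "\<dots> = Fract (of_nat (p ^ v)) 1" by (rule of_nat_fract)
  also have "(of_nat (p ^ v) :: rat poly) = [:of_nat (p ^ v):]" by (rule of_nat_poly)
  finally show ?thesis by (simp add: C_def)
qed

lemma vp_uniq_aux:
  assumes p: "prime p" and A: "nonzero_mod p A" and B': "nonzero_mod p B'"
    and eq: "C (of_nat p powi e) * ratfun_of A B = C (of_nat p powi e') * ratfun_of A' B'"
    and B: "nonzero_mod p B"
    and lt: "e < e'"
  shows False
proof -
  define m where "m = nat (e' - e)"
  have m1: "m \<ge> 1" using lt by (simp add: m_def)
  have pn: "(of_nat p :: rat) \<noteq> 0" using p by (simp add: prime_gt_0_nat)
  have "C (of_nat p powi (-e)) * (C (of_nat p powi e) * ratfun_of A B)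
      = C (of_nat p powi (-e)) * (C (of_nat p powi e') * ratfun_of A' B')" using eq by simp
  moreover have "of_nat p powi (-e) * of_nat p powi e = (1 :: rat)"
    using pn by (simp add: power_int_minus field_simps)
  moreover have "of_nat p powi (-e) * of_nat p powi e' = (of_nat p ^ m :: rat)"
  proof -
    have "(of_nat p powi (-e + e') :: rat) = of_nat p powi (-e) * of_nat p powi e'"
      by (rule power_int_add) (use pn in simp)
    then have "of_nat p powi (-e) * of_nat p powi e' = (of_nat p powi (-e + e') :: rat)" by simp
    also have "-e + e' = int m" using lt by (simp add: m_def)
    finally show ?thesis by simp
  qed
  ultimately have "ratfun_of A B = C (of_nat p ^ m) * ratfun_of A' B'"
    by (simp add: mult.assoc[symmetric] C_mult C_1)
  also have "C (of_nat p ^ m) = of_int (int p ^ m)" by (simp add: C_pow)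
  finally have "ratfun_of A B = ratfun_of (smult (int p ^ m) A') B'"
    using rof_smult[of "int p ^ m" A' B'] by simp
  moreover have "B \<noteq> 0" "B' \<noteq> 0" using B B' by (auto simp: nonzero_mod_def)
  ultimately have "A * B' = smult (int p ^ m) A' * B" by (simp add: rof_eq)
  moreover have "pz p (smult (int p ^ m) A' * B)"
    by (rule pz_multL, rule pz_smult_p) (use m1 in \<open>simp add: dvd_power\<close>)
  ultimately have "pz p (A * B')" by simp
  then show False using pz_mult[OF p] A B' by (auto simp: pz_nonzero_mod)
qed

lemma vp_ratfun_eq:
  assumes p: "prime p" and A: "nonzero_mod p A" and B: "nonzero_mod p B"
  shows "vp_ratfun p (C (of_nat p powi e) * ratfun_of A B) = ereal (of_int e)"
proof -
  have pn: "(of_nat p :: rat) \<noteq> 0" using p by (simp add: prime_gt_0_nat)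
  have B0: "B \<noteq> 0" and A0: "A \<noteq> 0" using A B by (auto simp: nonzero_mod_def)
  have "ratfun_of A B \<noteq> 0" using A0 B0 rof_eq[of B 1 A 0] by (simp add: rof_0[symmetric, of 1])
  moreover have "C (of_nat p powi e) \<noteq> 0" using pn by (simp add: C_def eq_fract Zero_fract_def)
  ultimately have nz: "C (of_nat p powi e) * ratfun_of A B \<noteq> 0" by simp
  have "(THE e'. \<exists>A' B'. nonzero_mod p A' \<and> nonzero_mod p B' \<and>
          C (of_nat p powi e) * ratfun_of A B = Fract [:(of_nat p) powi e':] 1 * ratfun_of A' B') = e"
  proof (rule the_equality)
    show "\<exists>A' B'. nonzero_mod p A' \<and> nonzero_mod p B' \<and>
          C (of_nat p powi e) * ratfun_of A B = Fract [:(of_nat p) powi e:] 1 * ratfun_of A' B'"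
      using A B by (auto simp: C_def)
  next
    fix e' assume "\<exists>A' B'. nonzero_mod p A' \<and> nonzero_mod p B' \<and>
          C (of_nat p powi e) * ratfun_of A B = Fract [:(of_nat p) powi e':] 1 * ratfun_of A' B'"
    then obtain A' B' where A'B': "nonzero_mod p A'" "nonzero_mod p B'"
      "C (of_nat p powi e) * ratfun_of A B = C (of_nat p powi e') * ratfun_of A' B'"
      by (auto simp: C_def)
    show "e' = e"
    proof (rule ccontr)
      assume "e' \<noteq> e"
      then consider "e < e'" | "e' < e" by linarith
      then show False
      proof cases
        case 1 then show False using vp_uniq_aux[OF p A A'B'(2) A'B'(3) B] by blast
      next
        case 2 then show False using vp_uniq_aux[OF p A'B'(1) B A'B'(3)[symmetric] A'B'(2)] by blast
      qed
    qed
  qed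
  then show ?thesis using nz unfolding vp_ratfun_def by (simp add: C_def)
qed

lemma vp_ratfun_pow:
  assumes p: "prime p" and N: "\<not> pz p N" and M: "\<not> pz p M"
  shows "vp_ratfun p (of_nat p ^ v * ratfun_of N M) = ereal (of_nat v)"
proof -
  have "C (of_nat p powi int v) = of_nat p ^ v" by (simp add: C_pow)
  then show ?thesis using vp_ratfun_eq[OF p, of N M "int v"] N M by (simp add: pz_nonzero_mod)
qed



lemma extract_int:
  assumes p: "prime p" shows "z \<noteq> 0 \<Longrightarrow> \<exists>w z'. z = int p ^ w * z' \<and> \<not> int p dvd z'"
proof (induction "nat \<bar>z\<bar>" arbitrary: z rule: less_induct)
  case less
  show ?case
  proof (cases "int p dvd z")
    case False show ?thesis by (rule exI[of _ 0], rule exI[of _ z]) (use False in auto)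
  next
    case True
    then obtain z1 where z1: "z = int p * z1" by (auto elim: dvdE)
    have p1: "int p > 1" using prime_gt_1_nat[OF p] by simp
    have "z1 \<noteq> 0" using less.prems z1 by auto
    then have "\<bar>z1\<bar> < \<bar>z\<bar>" using z1 p1 by (simp add: abs_mult)
    then obtain w z' where "z1 = int p ^ w * z'" "\<not> int p dvd z'"
      using less.hyps[of z1] \<open>z1 \<noteq> 0\<close> by fastforce
    then show ?thesis using z1 by (rule_tac exI[of _ "Suc w"], rule_tac exI[of _ z']) auto
  qed
qed

lemma extract_poly:
  assumes p: "prime p" shows "X \<noteq> 0 \<Longrightarrow> \<exists>s X'. X = smult (int p ^ s) X' \<and> \<not> pz p X'"
proof (induction "nat \<bar>lead_coeff X\<bar>" arbitrary: X rule: less_induct)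
  case less
  show ?case
  proof (cases "pz p X")
    case False show ?thesis by (rule exI[of _ 0], rule exI[of _ X]) (use False in auto)
  next
    case True
    then obtain X1 where X1: "X = smult (int p) X1" using pz_ex by blast
    have p1: "int p > 1" using prime_gt_1_nat[OF p] by simp
    have "X1 \<noteq> 0" using less.prems X1 by auto
    then have "lead_coeff X1 \<noteq> 0" by simp
    moreover have "lead_coeff X = int p * lead_coeff X1" using X1 p1 by simp
    ultimately have "\<bar>lead_coeff X1\<bar> < \<bar>lead_coeff X\<bar>" using p1 by (simp add: abs_mult)
    then obtain s X' where "X1 = smult (int p ^ s) X'" "\<not> pz p X'"
      using less.hyps[of X1] \<open>X1 \<noteq> 0\<close> by fastforce
    then show ?thesis using X1 by (rule_tac exI[of _ "Suc s"], rule_tac exI[of _ X']) auto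
  qed
qed

lemma vp_rat_aux:
  assumes p: "prime p" and ab: "\<not> int p dvd a" "\<not> int p dvd b'" "b \<noteq> 0" "b' \<noteq> 0"
    and eq: "(of_nat p :: rat) powi e * (of_int a / of_int b) = of_nat p powi e' * (of_int a' / of_int b')"
    and lt: "e < e'"
  shows False
proof -
  define m where "m = nat (e' - e)"
  have m1: "m \<ge> 1" using lt by (simp add: m_def)
  have pn: "(of_nat p :: rat) \<noteq> 0" using p by (simp add: prime_gt_0_nat)
  have "(of_nat p powi (-e + e') :: rat) = of_nat p powi (-e) * of_nat p powi e'"
    by (rule power_int_add) (use pn in simp)
  moreover have "-e + e' = int m" using lt by (simp add: m_def)
  ultimately have pm: "(of_nat p powi (-e) * of_nat p powi e' :: rat) = of_nat p ^ m" by simp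
  have "(of_nat p powi (-e) :: rat) * of_nat p powi e = 1"
    using pn by (simp add: power_int_minus field_simps)
  then have "(of_int a / of_int b :: rat) = of_nat p powi (-e) * of_nat p powi e' * (of_int a' / of_int b')"
    using eq by (metis (no_types, lifting) mult.assoc mult_1)
  then have "(of_int a / of_int b :: rat) = of_nat p ^ m * (of_int a' / of_int b')" using pm by simp
  then have "(of_int (a * b') :: rat) = of_int (int p ^ m * a' * b)"
    using ab(3,4) by (simp add: field_simps)
  then have "a * b' = int p ^ m * a' * b" by (simp only: of_int_eq_iff)
  moreover have "int p dvd int p ^ m * a' * b" using m1 by (simp add: dvd_power)
  ultimately have "int p dvd a * b'" by simp
  then show False using ab p by (simp add: prime_dvd_mult_iff)
qed

lemma vp_rat_int:
  assumes p: "prime p" and z: "z = int p ^ w * z'" and z': "\<not> int p dvd z'"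
  shows "vp_rat p (of_int z) = ereal (of_nat w)"
proof -
  have pn: "(of_nat p :: rat) \<noteq> 0" using p by (simp add: prime_gt_0_nat)
  have z0: "z \<noteq> 0" using z z' p by (auto simp: prime_gt_0_nat)
  have "(THE e::int. \<exists>a b::int. \<not> int p dvd a \<and> \<not> int p dvd b \<and>
        (of_int z :: rat) = (of_nat p) powi e * (of_int a / of_int b)) = int w"
  proof (rule the_equality)
    show "\<exists>a b::int. \<not> int p dvd a \<and> \<not> int p dvd b \<and>
        (of_int z :: rat) = (of_nat p) powi (int w) * (of_int a / of_int b)"
      using z z' p by (intro exI[of _ z'] exI[of _ 1]) (auto simp: prime_gt_1_nat)
  next
    fix e assume "\<exists>a b::int. \<not> int p dvd a \<and> \<not> int p dvd b \<and>
        (of_int z :: rat) = (of_nat p) powi e * (of_int a / of_int b)"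
    then obtain a b where ab: "\<not> int p dvd a" "\<not> int p dvd b" "(of_int z :: rat) = (of_nat p) powi e * (of_int a / of_int b)"
      by blast
    have z2: "(of_int z :: rat) = (of_nat p) powi (int w) * (of_int z' / of_int 1)" using z by simp
    have b0: "b \<noteq> 0" using ab(2) by auto
    show "e = int w"
    proof (rule ccontr)
      assume "e \<noteq> int w"
      then consider "e < int w" | "int w < e" by linarith
      then show False
      proof cases
        case 1
        have p1: "\<not> int p dvd 1" using prime_gt_1_nat[OF p] by simp
        show False using vp_rat_aux[where p=p and a=a and b=b and b'=1 and a'=z' and e=e and e'="int w"] p ab(1) p1 b0 1 ab(3) z2 by simp
      next
        case 2
        show False using vp_rat_aux[where p=p and a=z' and b=1 and b'=b and a'=a and e="int w" and e'=e] p z' ab(2) b0 2 ab(3) z2 by simp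
      qed
    qed
  qed
  then show ?thesis using z0 unfolding vp_rat_def by simp
qed

lemma vp_rat_gen:
  assumes p: "prime p" shows "\<exists>w z'. b \<noteq> 0 \<longrightarrow> (b = int p ^ w * z' \<and> \<not> int p dvd z' \<and> vp_rat p (of_int b) = ereal (of_nat w))"
  using extract_int[OF p, of b] vp_rat_int[OF p] by blast

lemma hyp_conv:
  assumes p: "prime p" and Hm: "Hm \<noteq> 0" and cop: "coprime Hp Hm" and v: "vp_ratfun p (ratfun_of Hp Hm) = 0"
  shows "\<not> pz p Hp \<and> \<not> pz p Hm"
proof -
  have R0: "ratfun_of Hp Hm \<noteq> 0" using v by (auto simp: vp_ratfun_def)
  then have Hp0: "Hp \<noteq> 0" by (auto simp: rof_0)
  have notboth: "\<not> (pz p Hp \<and> pz p Hm)"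
  proof
    assume "pz p Hp \<and> pz p Hm"
    then have "[:int p:] dvd Hp" "[:int p:] dvd Hm" by (auto simp: pz_def const_poly_dvd_iff)
    then have "is_unit [:int p:]" using coprime_common_divisor[OF cop] by blast
    then show False using p by (auto simp: is_unit_poly_iff prime_gt_1_nat)
  qed
  show ?thesis
  proof (cases "pz p Hp")
    case True
    then have nm: "\<not> pz p Hm" using notboth by blast
    obtain s X' where sX: "Hp = smult (int p ^ s) X'" "\<not> pz p X'" using extract_poly[OF p Hp0] by blast
    have s0: "s \<noteq> 0" using sX True by (cases s) auto
    have "ratfun_of Hp Hm = C (of_nat p powi int s) * ratfun_of X' Hm"
      by (simp add: sX C_pow rof_smult[symmetric])
    then have "vp_ratfun p (ratfun_of Hp Hm) = ereal (of_int (int s))"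
      using vp_ratfun_eq[OF p, of X' Hm "int s"] sX nm by (simp add: pz_nonzero_mod)
    then show ?thesis using v s0 by simp
  next
    case False
    note np = False
    show ?thesis
    proof (cases "pz p Hm")
      case False then show ?thesis using np by simp
    next
      case True
      obtain s Y' where sY: "Hm = smult (int p ^ s) Y'" "\<not> pz p Y'" using extract_poly[OF p Hm] by blast
      have s0: "s \<noteq> 0" using sY True by (cases s) auto
      have pn: "(of_nat p :: rat) \<noteq> 0" using p by (simp add: prime_gt_0_nat)
      have Y0: "Y' \<noteq> 0" using sY by auto
      have e1: "C (of_nat p ^ s) * ratfun_of Hp Hm = ratfun_of Hp Y'"
      proof -
        have "C (of_nat p ^ s) * ratfun_of Hp Hm = ratfun_of (smult (int p ^ s) Hp) Hm"
          by (simp add: C_pow rof_smult[symmetric])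
        also have "\<dots> = ratfun_of Hp Y'"
          using Y0 Hm by (simp add: rof_eq sY)
        finally show ?thesis .
      qed
      have e2: "C (of_nat p powi (- int s)) * C (of_nat p ^ s) = 1"
        using pn by (simp add: C_mult C_1 power_int_minus)
      have "ratfun_of Hp Hm = C (of_nat p powi (- int s)) * ratfun_of Hp Y'"
        by (simp add: e1[symmetric] mult.assoc[symmetric] e2)
      then have "vp_ratfun p (ratfun_of Hp Hm) = ereal (of_int (- int s))"
        using vp_ratfun_eq[OF p, of Hp Y' "- int s"] sY np by (simp add: pz_nonzero_mod)
      then show ?thesis using v s0 by simp
    qed
  qed
qed



lemma rm_coeff: "coeff (red_mod p X) i = coeff X i mod int p"
  by (simp add: red_mod_def coeff_map_poly)

lemma rm_cg: "pz p (X - red_mod p X)"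
  by (simp add: pz_def rm_coeff coeff_diff mod_eq_dvd_iff[symmetric] mod_diff_eq[symmetric]) 

lemma rm_eq_iff: "red_mod p X = red_mod p Y \<longleftrightarrow> pz p (X - Y)"
  by (simp add: poly_eq_iff rm_coeff pz_def coeff_diff mod_eq_dvd_iff)

lemma rm_0_iff: "red_mod p X = 0 \<longleftrightarrow> pz p X"
  using rm_eq_iff[of p X 0] by (simp add: red_mod_def)

lemma rm_lc: assumes "prime p" "\<not> pz p X" shows "\<not> int p dvd lead_coeff (red_mod p X)"
proof -
  have "red_mod p X \<noteq> 0" using assms(2) rm_0_iff by blast
  then have "lead_coeff (red_mod p X) \<noteq> 0" by simp
  moreover have "lead_coeff (red_mod p X) = lead_coeff (red_mod p X) mod int p"
    by (simp add: rm_coeff)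
  ultimately show ?thesis by (metis dvd_imp_mod_0)
qed

lemma rm_deg: "degree (red_mod p X) \<le> degree X"
  unfolding red_mod_def by (rule map_poly_degree_leq)

lemma pz_cong_coeff: "pz p (A - B) \<Longrightarrow> int p dvd coeff A i - coeff B i"
  by (simp add: pz_def coeff_diff)

lemma pz_iff_cong: "pz p (A - B) \<Longrightarrow> pz p A \<longleftrightarrow> pz p B"
proof -
  assume "pz p (A - B)"
  moreover have "A = (A - B) + B" "B = A - (A - B)" by simp_all
  ultimately show ?thesis by (metis pz_add pz_diff)
qed

lemma lc_not_pz: "\<not> int p dvd lead_coeff X \<Longrightarrow> \<not> pz p X"
  by (auto simp: pz_def)

lemma final_core:
  fixes X1 X2 Y2 :: "int poly" and y1 c :: int
  assumes p: "prime p" and y1: "\<not> int p dvd y1" and Y2: "\<not> int p dvd lead_coeff Y2"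
    and cases: "(X2 = 0 \<and> \<not> int p dvd lead_coeff X1 \<and> (c = 0 \<or> degree X1 \<ge> 1))
              \<or> (\<not> int p dvd lead_coeff X2 \<and> degree X2 < degree Y2)"
  shows "\<not> pz p ((X1 + [:c * y1:]) * Y2 + smult y1 X2)"
proof -
  have pp: "prime (int p)" using p by simp
  have nY2: "\<not> pz p Y2" using Y2 by (rule lc_not_pz)
  from cases show ?thesis
  proof
    assume a: "X2 = 0 \<and> \<not> int p dvd lead_coeff X1 \<and> (c = 0 \<or> degree X1 \<ge> 1)"
    have "\<not> pz p (X1 + [:c * y1:])"
    proof (cases "c = 0")
      case True then show ?thesis using a lc_not_pz by simp
    next
      case False
      then have d1: "degree X1 \<ge> 1" using a by simp
      have "coeff (X1 + [:c * y1:]) (degree X1) = lead_coeff X1"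
        using d1 by (simp add: coeff_pCons split: nat.splits)
      then have "\<not> int p dvd coeff (X1 + [:c * y1:]) (degree X1)" using a by simp
      then show ?thesis by (auto simp: pz_def)
    qed
    then show ?thesis using a nY2 pz_mult[OF p] by auto
  next
    assume b: "\<not> int p dvd lead_coeff X2 \<and> degree X2 < degree Y2"
    define S where "S = X1 + [:c * y1:]"
    show ?thesis unfolding S_def[symmetric]
    proof (cases "pz p S")
      case True
      have "pz p ((S * Y2 + smult y1 X2) - smult y1 X2)" using True by (simp add: pz_multL)
      moreover have "\<not> pz p (smult y1 X2)"
      proof
        assume "pz p (smult y1 X2)"
        then have "int p dvd coeff (smult y1 X2) (degree X2)" by (simp add: pz_def)
        then show False using b y1 pp by (simp add: prime_dvd_mult_iff)
      qed
      ultimately show "\<not> pz p (S * Y2 + smult y1 X2)" using pz_iff_cong by blast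
    next
      case False
      define r where "r = red_mod p S"
      have r0: "r \<noteq> 0" using False rm_0_iff unfolding r_def by blast
      have lr: "\<not> int p dvd lead_coeff r" using rm_lc[OF p False] unfolding r_def .
      define n where "n = degree r + degree Y2"
      have c1: "coeff (r * Y2) n = lead_coeff r * lead_coeff Y2"
        unfolding n_def by (rule coeff_mult_degree_sum)
      have c2: "coeff (smult y1 X2) n = 0" using b unfolding n_def by (simp add: coeff_eq_0)
      have cg: "pz p ((S * Y2 + smult y1 X2) - (r * Y2 + smult y1 X2))"
      proof -
        have "(S * Y2 + smult y1 X2) - (r * Y2 + smult y1 X2) = (S - r) * Y2" by (simp add: algebra_simps)
        then show ?thesis using rm_cg[of p S] by (simp add: r_def pz_multL)
      qed
      have "coeff (r * Y2 + smult y1 X2) n = lead_coeff r * lead_coeff Y2"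
        using c1 c2 by (simp only: coeff_add)
      then have "\<not> int p dvd coeff (r * Y2 + smult y1 X2) n"
        using lr Y2 pp by (simp add: prime_dvd_mult_iff)
      then have "\<not> pz p (r * Y2 + smult y1 X2)" by (auto simp: pz_def)
      then show "\<not> pz p (S * Y2 + smult y1 X2)" using pz_iff_cong[OF cg] by blast
    qed
  qed
qed



lemma inv_mod:
  assumes p: "prime p" and a: "\<not> int p dvd a"
  shows "\<exists>a' k. a * a' + int p * k = 1"
proof -
  have "coprime (int p) a" using p a by (intro prime_imp_coprime) auto
  then have "gcd a (int p) = 1" by (simp add: coprime_iff_gcd_eq_1 gcd.commute)
  then obtain u v where "u * a + v * int p = 1" using bezout_int[of a "int p"] by auto
  then show ?thesis by (intro exI[of _ u] exI[of _ v]) (simp add: mult.commute)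
qed

lemma deg_eq_zeros:
  assumes "\<And>i. coeff A i = 0 \<longleftrightarrow> coeff B i = 0"
  shows "degree A = degree (B :: int poly)"
proof (cases "A = 0")
  case True
  then have "B = 0" using assms by (simp add: poly_eq_iff)
  then show ?thesis using True by simp
next
  case False
  then have B: "B \<noteq> 0" using assms by (auto simp: poly_eq_iff)
  have "coeff B (degree A) \<noteq> 0" using False assms[of "degree A"] by simp
  then have "degree A \<le> degree B" by (rule le_degree)
  moreover have "coeff A (degree B) \<noteq> 0" using B assms[of "degree B"] by simp
  then have "degree B \<le> degree A" by (rule le_degree)
  ultimately show ?thesis by simp
qed

lemma ring_id3:
  fixes Hp D q' sB r' A Hm Ab Bb Q R :: "int poly"
  shows "Hp*D - (q'*sB + r'*A)*Hm = (Hp - Ab)*D - (q'*sB + r'*A)*(Hm - Bb) - ((q' - Q)*sB + (r' - R)*A)*Bb + (Ab*D - (Q*sB + R*A)*Bb)"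
  by (simp add: algebra_simps)

lemma ring_id4:
  fixes Hp A' Q Hm Ab Bb R A :: "int poly"
  shows "Hp - (A'*Q)*Hm = (Hp - Ab) - (A'*Q)*(Hm - Bb) + A'*R + (Ab - A*A'*Ab) + A'*(A*Ab - (Bb*Q + R))"
  by (simp add: algebra_simps)

lemma decomposition:
  assumes p: "prime p" and nA: "\<not> pz p Hp" and nB: "\<not> pz p Hm"
  shows "\<exists>Q R a. \<not> int p dvd a \<and>
     inO p 1 (ratfun_of Hp Hm - (ratfun_of (red_mod p Q) [:a:] + ratfun_of (red_mod p R) (smult a (red_mod p Hm))))
     \<and> degree Q \<le> degree Hp \<and> (R = 0 \<or> degree R < degree (red_mod p Hm))
     \<and> (pz p R \<longrightarrow> reduces_to_poly p Hp Hm \<and> deg_p p Hp Hm = degree (red_mod p Q))"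
proof -
  have pp: "prime (int p)" using p by simp
  define Ab where "Ab = red_mod p Hp"
  define Bb where "Bb = red_mod p Hm"
  have Bb0: "Bb \<noteq> 0" using nB rm_0_iff unfolding Bb_def by blast
  have lB: "\<not> int p dvd lead_coeff Bb" using rm_lc[OF p nB] unfolding Bb_def .
  obtain Q R where pd: "pseudo_divmod Ab Bb = (Q, R)" by fastforce
  define a where "a = lead_coeff Bb ^ (Suc (degree Ab) - degree Bb)"
  have na: "\<not> int p dvd a" using lB prime_dvd_power[OF pp] unfolding a_def by blast
  then have a0: "a \<noteq> 0" by auto
  have eq: "smult a Ab = Bb * Q + R" using pseudo_divmod(1)[OF Bb0 pd] unfolding a_def .
  have Rd: "R = 0 \<or> degree R < degree Bb" using pseudo_divmod(2)[OF Bb0 pd] .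
  define D where "D = [:a:] * smult a Bb"
  define Nn where "Nn = red_mod p Q * smult a Bb + red_mod p R * [:a:]"
  have nD: "\<not> pz p D"
  proof -
    have "\<not> pz p [:a:]" unfolding pz_def using na by (intro notI) (drule spec[of _ 0], simp)
    moreover have "smult a Bb = [:a:] * Bb" by simp
    moreover have "\<not> pz p Bb" using pz_iff_cong[OF rm_cg[of p Hm]] nB unfolding Bb_def by blast
    ultimately show ?thesis unfolding D_def using npz_mult[OF p] by metis
  qed
  have D0: "D \<noteq> 0" using nD by auto
  have sum_eq: "ratfun_of (red_mod p Q) [:a:] + ratfun_of (red_mod p R) (smult a Bb) = ratfun_of Nn D"
    using a0 Bb0 by (simp add: rof_add Nn_def D_def mult.commute)
  have Hm0: "Hm \<noteq> 0" using nB by auto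
  have diff_eq: "ratfun_of Hp Hm - ratfun_of Nn D = ratfun_of (Hp * D - Nn * Hm) (Hm * D)"
    using Hm0 D0 by (simp add: rof_diff)
  have zero: "Ab * D - (Q * smult a Bb + R * [:a:]) * Bb = 0"
  proof -
    have "Ab * D = [:a:] * Bb * smult a Ab" by (simp add: D_def algebra_simps)
    moreover have "(Q * smult a Bb + R * [:a:]) * Bb = [:a:] * Bb * (Bb * Q + R)" by (simp add: algebra_simps)
    ultimately show ?thesis using eq by simp
  qed
  have pzN: "pz p (Hp * D - Nn * Hm)"
  proof -
    have id: "Hp * D - Nn * Hm = (Hp - Ab) * D - Nn * (Hm - Bb)
        - ((red_mod p Q - Q) * smult a Bb + (red_mod p R - R) * [:a:]) * Bb
        + (Ab * D - (Q * smult a Bb + R * [:a:]) * Bb)"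
      unfolding Nn_def by (rule ring_id3)
    have c1: "pz p (Hp - Ab)" unfolding Ab_def by (rule rm_cg)
    have c2: "pz p (Hm - Bb)" unfolding Bb_def by (rule rm_cg)
    have c3: "pz p (red_mod p Q - Q)" using rm_cg[of p Q] pz_uminus[of p "Q - red_mod p Q"] by simp
    have c4: "pz p (red_mod p R - R)" using rm_cg[of p R] pz_uminus[of p "R - red_mod p R"] by simp
    show ?thesis unfolding id zero
      by (intro pz_add pz_diff pz_multL pz_multR c1 c2 c3 c4) (simp add: pz_def)
  qed
  have inO1: "inO p 1 (ratfun_of Hp Hm - (ratfun_of (red_mod p Q) [:a:] + ratfun_of (red_mod p R) (smult a Bb)))"
    unfolding sum_eq diff_eq using inO_pz[OF npz_mult[OF p nB nD] pzN, of 0] by simp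
  have dQ: "degree Q \<le> degree Hp"
  proof (cases "Q = 0")
    case False
    have "degree (Bb * Q) = degree Bb + degree Q" using degree_mult_eq[OF Bb0 False] .
    then have "degree (Bb * Q + R) = degree Bb + degree Q"
    proof (cases "R = 0")
      case False
      then have "degree R < degree (Bb * Q)" using Rd \<open>degree (Bb * Q) = degree Bb + degree Q\<close> by linarith
      then show ?thesis using degree_add_eq_left[of R "Bb * Q"] \<open>degree (Bb * Q) = degree Bb + degree Q\<close> by simp
    qed simp
    moreover have "degree (smult a Ab) = degree Ab" using a0 by simp
    moreover have "degree Ab \<le> degree Hp" unfolding Ab_def by (rule rm_deg)
    ultimately have "degree Bb + degree Q \<le> degree Hp" using eq by simp
    then show ?thesis by linarith
  qed simp
  have polycase: "pz p R \<longrightarrow> reduces_to_poly p Hp Hm \<and> deg_p p Hp Hm = degree (red_mod p Q)"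
  proof
    assume pR: "pz p R"
    obtain a' k where ak: "a * a' + int p * k = 1" using inv_mod[OF p na] by blast
    define Q0 where "Q0 = smult a' Q"
    have "pz p (Hp - Q0 * Hm)"
    proof -
      have e1: "[:a:] * Ab = Bb * Q + R" using eq by simp
      have k1: "int p * k = 1 - a * a'" using ak by linarith
      have e2: "Ab - [:a:] * [:a':] * Ab = smult (int p * k) Ab"
        unfolding k1 by (simp add: smult_diff_left mult.commute)
      have id: "Hp - Q0 * Hm = (Hp - Ab) - Q0 * (Hm - Bb) + smult a' R + smult (int p * k) Ab"
        using ring_id4[of Hp "[:a':]" Q Hm Ab Bb R "[:a:]"] unfolding e1 e2 by (simp add: Q0_def)
      have c1: "pz p (Hp - Ab)" unfolding Ab_def by (rule rm_cg)
      have c2: "pz p (Hm - Bb)" unfolding Bb_def by (rule rm_cg)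
      show ?thesis unfolding id
        by (intro pz_add pz_diff pz_multR pz_smult c1 c2 pR pz_smult_p) simp
    qed
    then have rq: "red_mod p Hp = red_mod p (Q0 * Hm)" by (simp add: rm_eq_iff)
    then have red: "reduces_to_poly p Hp Hm" unfolding reduces_to_poly_def by blast
    define Q1 where "Q1 = (SOME Q. red_mod p Hp = red_mod p (Q * Hm))"
    have "red_mod p Hp = red_mod p (Q1 * Hm)" unfolding Q1_def by (rule someI[of _ Q0]) (rule rq)
    then have "pz p (Q1 * Hm - Q0 * Hm)" using rq by (simp add: rm_eq_iff[symmetric])
    then have "pz p ((Q1 - Q0) * Hm)" by (simp add: algebra_simps)
    then have "pz p (Q1 - Q0)" using pz_mult[OF p] nB by blast
    then have r1: "red_mod p Q1 = red_mod p Q0" by (simp add: rm_eq_iff)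
    have na': "\<not> int p dvd a'"
    proof
      assume "int p dvd a'"
      then have "int p dvd a * a' + int p * k" by simp
      then show False using ak pp by (simp add: prime_gt_1_int)
    qed
    have "degree (red_mod p Q0) = degree (red_mod p Q)"
    proof (rule deg_eq_zeros)
      fix i
      show "coeff (red_mod p Q0) i = 0 \<longleftrightarrow> coeff (red_mod p Q) i = 0"
        using na' pp by (simp add: rm_coeff Q0_def prime_dvd_mult_iff flip: dvd_eq_mod_eq_0)
    qed
    then show "reduces_to_poly p Hp Hm \<and> deg_p p Hp Hm = degree (red_mod p Q)"
      using red r1 by (simp add: deg_p_def Q1_def)
  qed
  show ?thesis
    using na inO1 dQ Rd polycase unfolding Bb_def by blast
qed



lemma Fit_zero: "i0 \<in> {1..n} \<Longrightarrow> hh i0 0 = hh i0 1 \<Longrightarrow> Fit hh n G = 0"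
proof (induction n)
  case 0 then show ?case by simp
next
  case (Suc n)
  show ?case
  proof (cases "i0 = Suc n")
    case True then show ?thesis using Suc.prems by (simp add: Dop_same)
  next
    case False
    then have "i0 \<in> {1..n}" using Suc.prems by auto
    then show ?thesis using Suc.IH Suc.prems by (simp add: Dop_0)
  qed
qed

lemma pit_fst_zero: "fst P = 0 \<Longrightarrow> fst (pit e u hh n P) = 0"
proof (induction n)
  case 0 then show ?case by simp
next
  case (Suc n)
  then show ?case by (simp add: pstep_def pstep0_def case_prod_unfold)
qed

lemma vp_ratfun_int: assumes p: "prime p" shows "vp_ratfun p (of_int b) = vp_rat p (of_int b)"
proof (cases "b = 0")
  case True then show ?thesis by (simp add: vp_ratfun_def vp_rat_def)
next
  case False
  obtain w z' where wz: "b = int p ^ w * z'" "\<not> int p dvd z'" using extract_int[OF p False] by blast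
  have "(of_int b :: ratfun) = of_nat p ^ w * ratfun_of [:z':] 1"
    by (simp add: wz rof_int[symmetric])
  moreover have "\<not> pz p [:z':]" using wz(2) unfolding pz_def by (intro notI) (drule spec[of _ 0], simp)
  moreover have "\<not> pz p 1" using p unfolding pz_def by (intro notI) (drule spec[of _ 0], simp add: prime_gt_1_nat)
  ultimately have "vp_ratfun p (of_int b) = ereal (of_nat w)" using vp_ratfun_pow[OF p] by simp
  then show ?thesis using vp_rat_int[OF p wz] by simp
qed

lemma Hplus_eq: assumes "Hm \<noteq> 0"
  shows "Hplus k q h Hp Hm = Fit (\<lambda>i j. h i j * q i) k (ratfun_of Hp Hm)"
proof -
  have "\<And>c. shift_ratfun Hp Hm c = sh c (ratfun_of Hp Hm)"
    using assms by (simp add: shift_ratfun_def sh_rof)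
  then show ?thesis unfolding Hplus_def using sum_identity[of k "\<lambda>i j. h i j * q i" "ratfun_of Hp Hm"]
    by simp
qed

lemma small_ndvd: "0 < z \<Longrightarrow> z < int p \<Longrightarrow> \<not> int p dvd z"
  using zdvd_imp_le by fastforce

lemma final_core2:
  fixes X1 X2 Y2 :: "int poly" and y1 c :: int
  assumes p: "prime p" and y1: "\<not> int p dvd y1" and Y2: "\<not> pz p Y2"
    and cases: "(X2 = 0 \<and> \<not> int p dvd lead_coeff X1 \<and> (c = 0 \<or> degree X1 \<ge> 1))
              \<or> (\<not> int p dvd lead_coeff X2 \<and> \<not> int p dvd lead_coeff Y2 \<and> degree X2 < degree Y2)"
  shows "\<not> pz p ((X1 + [:c * y1:]) * Y2 + smult y1 X2)"
  using cases
proof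
  assume a: "X2 = 0 \<and> \<not> int p dvd lead_coeff X1 \<and> (c = 0 \<or> degree X1 \<ge> 1)"
  have "\<not> pz p (X1 + [:c * y1:])"
  proof (cases "c = 0")
    case True then show ?thesis using a lc_not_pz by simp
  next
    case False
    then have d1: "degree X1 \<ge> 1" using a by simp
    have "coeff (X1 + [:c * y1:]) (degree X1) = lead_coeff X1"
      using d1 by (simp add: coeff_pCons split: nat.splits)
    then have "\<not> int p dvd coeff (X1 + [:c * y1:]) (degree X1)" using a by simp
    then show ?thesis by (auto simp: pz_def)
  qed
  then show ?thesis using a Y2 pz_mult[OF p] by auto
next
  assume b: "\<not> int p dvd lead_coeff X2 \<and> \<not> int p dvd lead_coeff Y2 \<and> degree X2 < degree Y2"
  then show ?thesis using final_core[OF p y1, of Y2 X2 X1 c] by blast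
qed



theorem proposition5p1:
  fixes k p :: nat and q :: "nat \<Rightarrow> int" and h :: "nat \<Rightarrow> nat \<Rightarrow> int"
    and Hp Hm :: "int poly"
  assumes "k \<ge> 1"
    and "Hm \<noteq> 0" and "coprime Hp Hm"
    and "vp_ratfun p (ratfun_of Hp Hm) = 0"
    and "prime p"
    and "p \<ge> k + deg_ratfun Hp Hm"
    and "\<not> int p dvd (\<Prod>i=1..k. q i)"
    and "reduces_to_poly p Hp Hm \<longrightarrow> deg_p p Hp Hm \<ge> k"
  shows "vp_ratfun p (Hplus k q h Hp Hm) = (\<Sum>i=1..k. vp_rat p (of_int (h i 1 - h i 0)))
    \<and> ((reduces_to_poly p Hp Hm \<longrightarrow> deg_p p Hp Hm > k) \<longrightarrow>
        (\<forall>b::int. vp_ratfun p (Hplus k q h Hp Hm + of_int b)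
            = min (\<Sum>i=1..k. vp_rat p (of_int (h i 1 - h i 0))) (vp_rat p (of_int b))))"
proof -
  note k1 = assms(1) and Hm0 = assms(2) and cop = assms(3) and v0 = assms(4) and p = assms(5)
    and pk = assms(6) and qp = assms(7) and hyp = assms(8)
  have pp: "prime (int p)" using p by simp
  have nHp: "\<not> pz p Hp" and nHm: "\<not> pz p Hm" using hyp_conv[OF p Hm0 cop v0] by auto
  define hh where "hh = (\<lambda>i j. h i j * q i)"
  define G where "G = ratfun_of Hp Hm"
  define SV where "SV = (\<Sum>i=1..k. vp_rat p (of_int (h i 1 - h i 0)))"
  have HP: "Hplus k q h Hp Hm = Fit hh k G" unfolding hh_def G_def by (rule Hplus_eq[OF Hm0])
  have qi: "\<And>i. i \<in> {1..k} \<Longrightarrow> \<not> int p dvd q i"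
  proof
    fix i assume "i \<in> {1..k}" "int p dvd q i"
    moreover have "q i dvd (\<Prod>i=1..k. q i)" using \<open>i \<in> {1..k}\<close> by (intro dvd_prodI) auto
    ultimately show False using qp dvd_trans by blast
  qed
  show ?thesis
  proof (cases "\<exists>i\<in>{1..k}. h i 1 = h i 0")
    case True
    then obtain i0 where i0: "i0 \<in> {1..k}" "h i0 1 = h i0 0" by blast
    have F0: "Fit hh k G = 0" using Fit_zero[OF i0(1), of hh] i0(2) by (simp add: hh_def)
    have SVinf: "SV = \<infinity>" unfolding SV_def sum_Pinfty using i0 by (auto simp: vp_rat_def)
    have z: "vp_ratfun p 0 = \<infinity>" by (simp add: vp_ratfun_def)
    have mi: "\<And>x::ereal. min \<infinity> x = x" by (rule min_absorb2) simp
    have "\<And>b. vp_ratfun p (0 + of_int b) = min \<infinity> (vp_rat p (of_int b))"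
      unfolding mi add_0_left by (rule vp_ratfun_int[OF p])
    then have A2: "\<forall>b. vp_ratfun p (Fit hh k G + of_int b) = min SV (vp_rat p (of_int b))"
      unfolding F0 SVinf by blast
    have A1: "vp_ratfun p (Fit hh k G) = SV" unfolding F0 SVinf by (rule z)
    show ?thesis unfolding HP SV_def[symmetric] using A1 A2 by (intro conjI impI) auto
  next
    case False
    then have hne: "\<forall>i\<in>{1..k}. h i 1 - h i 0 \<noteq> 0" by auto
    have "\<forall>i. \<exists>wz. i \<in> {1..k} \<longrightarrow> (h i 1 - h i 0 = int p ^ fst wz * snd wz \<and> \<not> int p dvd snd wz
          \<and> vp_rat p (of_int (h i 1 - h i 0)) = ereal (of_nat (fst wz)))"
    proof
      fix i
      show "\<exists>wz. i \<in> {1..k} \<longrightarrow> (h i 1 - h i 0 = int p ^ fst wz * snd wz \<and> \<not> int p dvd snd wz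
          \<and> vp_rat p (of_int (h i 1 - h i 0)) = ereal (of_nat (fst wz)))"
      proof (cases "i \<in> {1..k}")
        case True
        obtain w z' where wz: "h i 1 - h i 0 \<noteq> 0 \<longrightarrow> (h i 1 - h i 0 = int p ^ w * z' \<and> \<not> int p dvd z'
             \<and> vp_rat p (of_int (h i 1 - h i 0)) = ereal (of_nat w))"
          using vp_rat_gen[OF p, of "h i 1 - h i 0"] by blast
        have "h i 1 - h i 0 \<noteq> 0" using hne True by blast
        then show ?thesis using wz by (intro exI[of _ "(w, z')"]) (simp only: fst_conv snd_conv, blast)
      next
        case False then show ?thesis by blast
      qed
    qed
    from choice[OF this] obtain f where f: "\<forall>i. i \<in> {1..k} \<longrightarrow> (h i 1 - h i 0 = int p ^ fst (f i) * snd (f i) \<and> \<not> int p dvd snd (f i)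
          \<and> vp_rat p (of_int (h i 1 - h i 0)) = ereal (of_nat (fst (f i))))"
      by blast
    define e where "e = (\<lambda>i. fst (f i))"
    define u where "u = (\<lambda>i. snd (f i) * q i)"
    define v where "v = (\<Sum>i=1..k. e i)"
    have du: "\<forall>i\<in>{1..k}. \<not> int p dvd u i \<and> hh i 1 - hh i 0 = int p ^ e i * u i"
    proof
      fix i assume i: "i \<in> {1..k}"
      have "\<not> int p dvd u i" using f i qi[OF i] pp by (simp add: u_def prime_dvd_mult_iff)
      moreover have "hh i 1 - hh i 0 = (h i 1 - h i 0) * q i" by (simp add: hh_def algebra_simps)
      ultimately show "\<not> int p dvd u i \<and> hh i 1 - hh i 0 = int p ^ e i * u i"
        using f i by (simp add: e_def u_def mult.assoc)
    qed
    have d: "\<forall>i\<in>{1..k}. hh i 1 - hh i 0 = int p ^ e i * u i" using du by blast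
    have SVv: "SV = ereal (of_nat v)"
    proof -
      have ve: "\<And>i. i \<in> {1..k} \<Longrightarrow> vp_rat p (of_int (h i 1 - h i 0)) = ereal (of_nat (e i))"
        using f unfolding e_def by blast
      have "SV = (\<Sum>i=1..k. ereal (of_nat (e i)))" unfolding SV_def
        by (rule sum.cong[OF refl], rule ve)
      then show ?thesis by (simp add: v_def)
    qed
    obtain Q R a where dec: "\<not> int p dvd a"
      "inO p 1 (ratfun_of Hp Hm - (ratfun_of (red_mod p Q) [:a:] + ratfun_of (red_mod p R) (smult a (red_mod p Hm))))"
      "degree Q \<le> degree Hp" "R = 0 \<or> degree R < degree (red_mod p Hm)"
      "pz p R \<longrightarrow> reduces_to_poly p Hp Hm \<and> deg_p p Hp Hm = degree (red_mod p Q)"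
      using decomposition[OF p nHp nHm] by blast
    define P1 where "P1 = (red_mod p Q, [:a:])"
    define P2 where "P2 = (red_mod p R, smult a (red_mod p Hm))"
    define E0 where "E0 = G - (rofp P1 + rofp P2)"
    have E0: "inO p 1 E0" using dec(2) unfolding E0_def G_def P1_def P2_def by simp
    have Gdec: "G = rofp P1 + rofp P2 + E0" unfolding E0_def by simp
    have na: "\<not> pz p [:a:]" using dec(1) unfolding pz_def by (intro notI) (drule spec[of _ 0], simp)
    have nBb: "\<not> pz p (red_mod p Hm)" using pz_iff_cong[OF rm_cg[of p Hm]] nHm by blast
    have nP1: "\<not> pz p (snd P1)" using na by (simp add: P1_def)
    have nP2: "\<not> pz p (snd P2)"
    proof -
      have "smult a (red_mod p Hm) = [:a:] * red_mod p Hm" by simp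
      then show ?thesis using npz_mult[OF p na nBb] by (simp add: P2_def)
    qed
    obtain E' where E': "inO p (v + 1) E'" and FE: "Fit hh k (rofp P1 + rofp P2 + E0)
        = of_nat p ^ v * (rofp (pit e u hh k P1) + rofp (pit e u hh k P2)) + E'"
      using iter[OF p d nP1 nP2 E0] unfolding v_def by blast
    obtain XE YE where XE: "\<not> pz p YE" "E' = of_nat p ^ (v + 1) * ratfun_of XE YE"
      using E' unfolding inO_def by blast
    obtain X1 Y1 where P1k: "pit e u hh k P1 = (X1, Y1)" by fastforce
    obtain X2 Y2 where P2k: "pit e u hh k P2 = (X2, Y2)" by fastforce
    have nY1: "\<not> pz p Y1" using pit_npz[OF p nP1, of e u hh k] P1k by simp
    have nY2: "\<not> pz p Y2" using pit_npz[OF p nP2, of e u hh k] P2k by simp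
    have dY1: "degree Y1 = 0" using pit_const[of P1 e u hh k] P1k by (simp add: P1_def)
    define y1 where "y1 = coeff Y1 0"
    have Y1c: "Y1 = [:y1:]" using dY1 unfolding y1_def by (metis degree_0_id)
    have ny1: "\<not> int p dvd y1"
    proof
      assume "int p dvd y1"
      then have "pz p [:y1:]" unfolding pz_def by (intro allI, case_tac i) simp_all
      then show False using nY1 Y1c by simp
    qed
    define Nf where "Nf = (X1 * Y2 + X2 * Y1) * YE + smult (int p) XE * (Y1 * Y2)"
    define Mf where "Mf = Y1 * Y2 * YE"
    have nMf: "\<not> pz p Mf" unfolding Mf_def using nY1 nY2 XE(1) by (simp add: npz_mult[OF p])
    have FNM: "Fit hh k G = of_nat p ^ v * ratfun_of Nf Mf"
    proof -
      have Y10: "Y1 \<noteq> 0" "Y2 \<noteq> 0" "YE \<noteq> 0" using nY1 nY2 XE(1) by auto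
      have "Fit hh k G = of_nat p ^ v * (ratfun_of X1 Y1 + ratfun_of X2 Y2) + of_nat p ^ (v + 1) * ratfun_of XE YE"
        using FE Gdec P1k P2k XE(2) by simp
      also have "of_nat p ^ (v + 1) * ratfun_of XE YE = of_nat p ^ v * ratfun_of (smult (int p) XE) YE"
        by (simp add: rof_smult[symmetric] mult_ac)
      finally have "Fit hh k G = of_nat p ^ v * (ratfun_of X1 Y1 + ratfun_of X2 Y2 + ratfun_of (smult (int p) XE) YE)"
        by (simp add: algebra_simps)
      also have "ratfun_of X1 Y1 + ratfun_of X2 Y2 + ratfun_of (smult (int p) XE) YE = ratfun_of Nf Mf"
        using Y10 by (simp add: rof_add Nf_def Mf_def mult_ac)
      finally show ?thesis .
    qed
    have key: "\<not> pz p (Nf + smult c Mf)"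
      if cs: "(X2 = 0 \<and> \<not> int p dvd lead_coeff X1 \<and> (c = 0 \<or> degree X1 \<ge> 1))
              \<or> (\<not> int p dvd lead_coeff X2 \<and> \<not> int p dvd lead_coeff Y2 \<and> degree X2 < degree Y2)" for c
    proof -
      have core: "\<not> pz p ((X1 + [:c * y1:]) * Y2 + smult y1 X2)" by (rule final_core2[OF p ny1 nY2 cs])
      have "Nf + smult c Mf = ((X1 + [:c * y1:]) * Y2 + smult y1 X2) * YE + smult (int p) XE * (Y1 * Y2)"
        unfolding Nf_def Mf_def Y1c by (simp add: algebra_simps)
      moreover have "\<not> pz p (((X1 + [:c * y1:]) * Y2 + smult y1 X2) * YE)" using core XE(1) by (simp add: npz_mult[OF p])
      moreover have "pz p (smult (int p) XE * (Y1 * Y2))" by (intro pz_multL pz_smult_p) simp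
      ultimately show ?thesis using pz_iff_cong by (metis add_diff_cancel_left')
    qed
    have cs_all: "\<forall>c::int. (c = 0 \<or> (reduces_to_poly p Hp Hm \<longrightarrow> deg_p p Hp Hm > k)) \<longrightarrow>
        ((X2 = 0 \<and> \<not> int p dvd lead_coeff X1 \<and> (c = 0 \<or> degree X1 \<ge> 1))
              \<or> (\<not> int p dvd lead_coeff X2 \<and> \<not> int p dvd lead_coeff Y2 \<and> degree X2 < degree Y2))"
    proof (cases "pz p R")
      case True
      have rd: "reduces_to_poly p Hp Hm" "deg_p p Hp Hm = degree (red_mod p Q)" using dec(5) True by auto
      define m where "m = degree (red_mod p Q)"
      have mk: "m \<ge> k" using hyp rd unfolding m_def by simp
      have mp: "m + k \<le> p"
      proof -
        have "m \<le> degree Q" unfolding m_def by (rule rm_deg)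
        also have "\<dots> \<le> degree Hp" by (rule dec(3))
        also have "\<dots> \<le> deg_ratfun Hp Hm" by (simp add: deg_ratfun_def)
        finally show ?thesis using pk by simp
      qed
      have X20: "X2 = 0"
      proof -
        have "fst P2 = 0" using True rm_0_iff by (simp add: P2_def)
        then show ?thesis using pit_fst_zero[of P2 e u hh k] P2k by simp
      qed
      have rQ0: "red_mod p Q \<noteq> 0" using mk k1 by (auto simp: m_def)
      have g1: "good p P1" using dec(1) rm_lc[OF p] rQ0 rm_0_iff unfolding P1_def good_def by auto
      have o1: "\<forall>j<k. \<not> int p dvd (ordi P1 - int j)"
      proof (intro allI impI)
        fix j assume "j < k"
        moreover have "ordi P1 = int m" by (simp add: ordi_def P1_def m_def)
        ultimately show "\<not> int p dvd (ordi P1 - int j)" using mk mp by (intro small_ndvd) auto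
      qed
      have gk: "good p (X1, Y1)" "ordi (X1, Y1) = ordi P1 - int k"
        using pit_good[OF p du g1 o1] P1k by auto
      have lX1: "\<not> int p dvd lead_coeff X1" using gk(1) by (simp add: good_def)
      have dX1: "int (degree X1) = int m - int k" using gk(2) dY1 by (simp add: ordi_def P1_def m_def)
      show ?thesis
      proof (intro allI impI)
        fix c :: int assume "c = 0 \<or> (reduces_to_poly p Hp Hm \<longrightarrow> k < deg_p p Hp Hm)"
        then have "c = 0 \<or> m > k" using rd by (auto simp: m_def)
        then have "c = 0 \<or> degree X1 \<ge> 1" using dX1 by auto
        then show "(X2 = 0 \<and> \<not> int p dvd lead_coeff X1 \<and> (c = 0 \<or> degree X1 \<ge> 1))
              \<or> (\<not> int p dvd lead_coeff X2 \<and> \<not> int p dvd lead_coeff Y2 \<and> degree X2 < degree Y2)"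
          using X20 lX1 by blast
      qed
    next
      case False
      have R0: "R \<noteq> 0" using False by auto
      have dR: "degree R < degree (red_mod p Hm)" using dec(4) R0 by auto
      have Bb0: "red_mod p Hm \<noteq> 0" using nBb by auto
      have a0: "a \<noteq> 0" using dec(1) by auto
      have g2: "good p P2"
        using rm_lc[OF p False] rm_lc[OF p nHm] dec(1) pp a0 unfolding P2_def good_def
        by (simp add: prime_dvd_mult_iff)
      define n0 where "n0 = degree (red_mod p Hm) - degree (red_mod p R)"
      have dRR: "degree (red_mod p R) \<le> degree R" by (rule rm_deg)
      have n01: "n0 \<ge> 1" using dR dRR unfolding n0_def by linarith
      have n0p: "n0 + k \<le> p"
      proof -
        have "n0 \<le> degree (red_mod p Hm)" unfolding n0_def by simp
        also have "\<dots> \<le> degree Hm" by (rule rm_deg)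
        also have "\<dots> \<le> deg_ratfun Hp Hm" by (simp add: deg_ratfun_def)
        finally show ?thesis using pk by simp
      qed
      have oP2: "ordi P2 = - int n0" using dR dRR a0 unfolding ordi_def P2_def n0_def by simp
      have o2: "\<forall>j<k. \<not> int p dvd (ordi P2 - int j)"
      proof (intro allI impI)
        fix j assume "j < k"
        then have "\<not> int p dvd (int n0 + int j)" using n01 n0p by (intro small_ndvd) auto
        then show "\<not> int p dvd (ordi P2 - int j)" unfolding oP2
          by (metis dvd_minus_iff minus_diff_eq diff_minus_eq_add uminus_add_conv_diff add.commute)
      qed
      have gk: "good p (X2, Y2)" "ordi (X2, Y2) = ordi P2 - int k"
        using pit_good[OF p du g2 o2] P2k by auto
      have "degree X2 < degree Y2" using gk(2) oP2 n01 unfolding ordi_def fst_conv snd_conv by linarith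
      then show ?thesis using gk(1) by (auto simp: good_def)
    qed
    have first: "vp_ratfun p (Fit hh k G) = ereal (of_nat v)"
    proof -
      have "\<not> pz p (Nf + smult 0 Mf)" using key cs_all by blast
      then have "\<not> pz p Nf" by simp
      then show ?thesis unfolding FNM using vp_ratfun_pow[OF p _ nMf] by simp
    qed
    have second: "vp_ratfun p (Fit hh k G + of_int b) = min (ereal (of_nat v)) (vp_rat p (of_int b))"
      if hb: "reduces_to_poly p Hp Hm \<longrightarrow> deg_p p Hp Hm > k" for b :: int
    proof (cases "b = 0")
      case True
      then show ?thesis using first by (simp add: vp_rat_def)
    next
      case False
      obtain w b' where wb: "b = int p ^ w * b'" "\<not> int p dvd b'" using extract_int[OF p False] by blast
      have vb: "vp_rat p (of_int b) = ereal (of_nat w)" by (rule vp_rat_int[OF p wb])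
      have M0: "Mf \<noteq> 0" using nMf by auto
      show ?thesis
      proof (cases "v \<le> w")
        case True
        define c where "c = int p ^ (w - v) * b'"
        have "(of_int b :: ratfun) = of_nat p ^ v * ratfun_of [:c:] 1"
        proof -
          have "b = int p ^ v * c" using True wb(1) by (simp add: c_def power_add[symmetric])
          then show ?thesis by (simp add: rof_int[symmetric])
        qed
        moreover have "ratfun_of Nf Mf + ratfun_of [:c:] 1 = ratfun_of (Nf + smult c Mf) Mf"
          using rof_add[of Mf 1 Nf "[:c:]"] M0 by simp
        ultimately have "Fit hh k G + of_int b = of_nat p ^ v * ratfun_of (Nf + smult c Mf) Mf"
          unfolding FNM by (simp add: distrib_left[symmetric])
        moreover have "\<not> pz p (Nf + smult c Mf)" using key cs_all hb by blast
        ultimately have "vp_ratfun p (Fit hh k G + of_int b) = ereal (of_nat v)"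
          using vp_ratfun_pow[OF p _ nMf] by simp
        then show ?thesis using vb True by simp
      next
        case False
        define N2 where "N2 = smult (int p ^ (v - w)) Nf + smult b' Mf"
        have "Fit hh k G + of_int b = of_nat p ^ w * ratfun_of N2 Mf"
        proof -
          have "(of_nat p ^ v :: ratfun) = of_nat p ^ w * of_int (int p ^ (v - w))"
            using False by (simp add: power_add[symmetric])
          moreover have "(of_int b :: ratfun) = of_nat p ^ w * of_int b'" by (simp add: wb(1))
          ultimately have "Fit hh k G + of_int b = of_nat p ^ w * (of_int (int p ^ (v - w)) * ratfun_of Nf Mf + of_int b')"
            unfolding FNM by (simp add: algebra_simps)
          also have "of_int (int p ^ (v - w)) * ratfun_of Nf Mf + of_int b' = ratfun_of (smult (int p ^ (v - w)) Nf) Mf + ratfun_of [:b':] 1"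
            by (simp only: rof_smult, simp only: rof_int)
          also have "\<dots> = ratfun_of N2 Mf"
            using rof_add[of Mf 1 "smult (int p ^ (v - w)) Nf" "[:b':]"] M0 by (simp add: N2_def)
          finally show ?thesis .
        qed
        moreover have "\<not> pz p N2"
        proof -
          have "pz p (smult (int p ^ (v - w)) Nf)" using False by (intro pz_smult_p) simp
          moreover have "\<not> pz p (smult b' Mf)"
          proof -
            have "\<not> pz p [:b':]" using wb(2) unfolding pz_def by (intro notI) (drule spec[of _ 0], simp)
            then have "\<not> pz p ([:b':] * Mf)" using npz_mult[OF p _ nMf] by blast
            then show ?thesis by simp
          qed
          moreover have "pz p (N2 - smult b' Mf)" using calculation(1) by (simp add: N2_def)
          ultimately show ?thesis using pz_iff_cong by blast
        qed
        ultimately have "vp_ratfun p (Fit hh k G + of_int b) = ereal (of_nat w)"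
          using vp_ratfun_pow[OF p _ nMf] by simp
        then show ?thesis using vb False by simp
      qed
    qed
    show ?thesis unfolding HP SV_def[symmetric] SVv using first second by blast
  qed
qed


end
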